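(* Let $c>0$, $D>0$, $k>0$ and let $u(\theta,\varphi,t)$ be the solution of the initial value problem described in the context, with approximation of truncation degree $L\in\mathbb N$ \[ u_L(\theta ,\varphi ,t) = \exp\left(-\frac{c^{2}t}{2D}\right)\sum_{l=0}^{L-1}\sum_{m=-l}^{l}Y_{lm}(\theta ,\varphi )\xi _{lm}(t). \] Then there is a constant $C$ such that for $t>0$ the truncation error is bounded by \[ \|u(\theta ,\varphi ,t)-u_L(\theta ,\varphi ,t)\|_{L_2(\Omega \times \mathbb S^{2})} \le C\left(\sum_{l=L}^{\infty }(2l+1)C_{l}\right)^{1/2}. \] Moreover, for $L>\frac{\sqrt{D^{2}k^{2}+c^{2}}-Dk}{2Dk}$ it holds \[ \|u(\theta ,\varphi ,t)-u_L(\theta ,\varphi ,t)\|_{L_2(\Omega \times \mathbb S^{2})}\le C\exp\left( -\frac{c^{2}t}{2D}\right)\left(\sum_{l=L}^{\infty}(2l+1)C_{l}\right)^{1/2}, \] where the constant $C$ depends only on the parameters $c$, $D$ and $k$.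
   Context: On the unit sphere $\mathbb{S}^2$ with coordinates $(\theta,\varphi)\in[0,\pi)\times[0,2\pi)$ and measure $\sin\theta\,d\theta\,d\varphi$, $Y_{lm}(\theta,\varphi)=d_{lm}e^{im\varphi}P_l^m(\cos\theta)$, $d_{lm}=(-1)^m\big[\frac{(2l+1)(l-m)!}{4\pi(l+m)!}\big]^{1/2}$, are the complex spherical harmonics; $\mathbf{0}$ denotes $\theta=\varphi=0$. Let $T=\sum_{l\ge0}\sum_{m=-l}^l a_{lm}Y_{lm}$ be a real Gaussian isotropic random field: $a_{lm}$ complex Gaussian with $a_{lm}=(-1)^ma_{l,-m}$, $\mathbf E a_{lm}=0$, $\mathbf E a_{lm}\overline{a_{l'm'}}=\delta_l^{l'}\delta_m^{m'}C_l$, independent for $m\ne -m'$, with angular power spectrum satisfying $\sum_l(2l+1)C_l<\infty$. The solution of $\frac{1}{c^2}u_{tt}+\frac1D u_t=k^2\Delta_{(\theta,\varphi)}u$ ($\Delta_{(\theta,\varphi)}$ the Laplace–Beltrami operator), $u|_{t=0}=T$, $u_t|_{t=0}=0$, is the $L_2(\Omega\times\mathbb S^2)$-convergent series $u(\theta,\varphi,t)=\exp(-\frac{c^2t}{2D})\sum_{l\ge0}\sum_{m=-l}^lY_{lm}(\theta,\varphi)\xi_{lm}(t)$ with $\xi_{lm}(t)=\sqrt{\frac{4\pi}{2l+1}}a_{lm}\overline{Y_{l0}(\mathbf 0)}[A_l(t)+B_l(t)]$, where, with $K_l=\sqrt{\frac{c^4}{4D^2}-c^2l(l+1)k^2}$,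 $K_l'=\sqrt{c^2l(l+1)k^2-\frac{c^4}{4D^2}}$, $l^*=\frac{\sqrt{D^2k^2+c^2}-Dk}{2Dk}$: $A_l(t)=[\cosh(tK_l)+\frac{c^2}{2DK_l}\sinh(tK_l)]\mathbf 1_{\{l\le l^*\}}$, $B_l(t)=[\cos(tK_l')+\frac{c^2}{2DK_l'}\sin(tK_l')]\mathbf 1_{\{l>l^*\}}$ (with $\sinh(tK_l)/K_l:=t$ if $K_l=0$). $\|X\|_{L_2(\Omega\times\mathbb S^2)}$ denotes $(\mathbf E\int_{\mathbb S^2}|X|^2\sin\theta\,d\theta\,d\varphi)^{1/2}$. *)

theory Defs
  imports "HOL-Probability.Probability"
begin

text \<open>Associated Legendre function via the Rodrigues formula (no Condon-Shortley phase;
  the sign (-1)^m is in the normalising constant d_lm), valid for all -l <= m <= l.\<close>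
definition legendreP :: "nat \<Rightarrow> int \<Rightarrow> real \<Rightarrow> real" where
  "legendreP l m x = 1 / (2 ^ l * fact l) * (sqrt (1 - x^2) powi m)
      * (deriv ^^ nat (int l + m)) (\<lambda>y. (y^2 - 1) ^ l) x"

definition dlm :: "nat \<Rightarrow> int \<Rightarrow> real" where
  "dlm l m = (-1) ^ nat \<bar>m\<bar> *
     sqrt ((2 * real l + 1) * fact (nat (int l - m)) / (4 * pi * fact (nat (int l + m))))"

definition sphY :: "nat \<Rightarrow> int \<Rightarrow> real \<Rightarrow> real \<Rightarrow> complex" where
  "sphY l m \<theta> \<phi> = complex_of_real (dlm l m * legendreP l m (cos \<theta>)) * exp (\<i> * of_int m * of_real \<phi>)"

definition real_gaussian :: "'a measure \<Rightarrow> ('a \<Rightarrow> real) \<Rightarrow> bool" where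
  "real_gaussian M X \<longleftrightarrow> (\<exists>\<mu>. AE \<omega> in M. X \<omega> = \<mu>) \<or>
     (\<exists>\<mu> \<sigma>. \<sigma> > 0 \<and> distributed M lborel X (normal_density \<mu> \<sigma>))"

definition complex_gaussian :: "'a measure \<Rightarrow> ('a \<Rightarrow> complex) \<Rightarrow> bool" where
  "complex_gaussian M Z \<longleftrightarrow> (\<forall>\<alpha> \<beta> :: real. real_gaussian M (\<lambda>\<omega>. \<alpha> * Re (Z \<omega>) + \<beta> * Im (Z \<omega>)))"

definition iso_gauss_field :: "'a measure \<Rightarrow> (nat \<Rightarrow> int \<Rightarrow> 'a \<Rightarrow> complex) \<Rightarrow> (nat \<Rightarrow> real) \<Rightarrow> bool" where
  "iso_gauss_field M a Cl \<longleftrightarrow> prob_space M \<and>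
    (\<forall>l m. \<bar>m\<bar> \<le> int l \<longrightarrow> a l m \<in> borel_measurable M) \<and>
    (\<forall>l m. \<bar>m\<bar> \<le> int l \<longrightarrow> complex_gaussian M (a l m)) \<and>
    (\<forall>l m. \<bar>m\<bar> \<le> int l \<longrightarrow> (\<forall>\<omega>\<in>space M. a l m \<omega> = (-1) ^ nat \<bar>m\<bar> * cnj (a l (-m) \<omega>))) \<and>
    (\<forall>l m. \<bar>m\<bar> \<le> int l \<longrightarrow> integrable M (\<lambda>\<omega>. (cmod (a l m \<omega>))^2)) \<and>
    (\<forall>l m. \<bar>m\<bar> \<le> int l \<longrightarrow> integral\<^sup>L M (a l m) = 0) \<and>
    (\<forall>l m l' m'. \<bar>m\<bar> \<le> int l \<longrightarrow> \<bar>m'\<bar> \<le> int l' \<longrightarrow>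
        integral\<^sup>L M (\<lambda>\<omega>. a l m \<omega> * cnj (a l' m' \<omega>)) =
          (if l = l' \<and> m = m' then complex_of_real (Cl l) else 0)) \<and>
    (\<forall>l m l' m'. \<bar>m\<bar> \<le> int l \<longrightarrow> \<bar>m'\<bar> \<le> int l' \<longrightarrow> (l, m) \<noteq> (l', m') \<longrightarrow> (l, m) \<noteq> (l', -m') \<longrightarrow>
        prob_space.indep_var M borel (a l m) borel (a l' m')) \<and>
    summable (\<lambda>l. (2 * real l + 1) * Cl l)"

definition lstar :: "real \<Rightarrow> real \<Rightarrow> real \<Rightarrow> real" where
  "lstar c D k = (sqrt (D^2 * k^2 + c^2) - D * k) / (2 * D * k)"

definition Kl :: "real \<Rightarrow> real \<Rightarrow> real \<Rightarrow> nat \<Rightarrow> real" where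
  "Kl c D k l = sqrt (c^4 / (4 * D^2) - c^2 * real l * (real l + 1) * k^2)"

definition Kl' :: "real \<Rightarrow> real \<Rightarrow> real \<Rightarrow> nat \<Rightarrow> real" where
  "Kl' c D k l = sqrt (c^2 * real l * (real l + 1) * k^2 - c^4 / (4 * D^2))"

definition Al :: "real \<Rightarrow> real \<Rightarrow> real \<Rightarrow> nat \<Rightarrow> real \<Rightarrow> real" where
  "Al c D k l t = (if real l \<le> lstar c D k then
      cosh (t * Kl c D k l) + c^2 / (2 * D) *
        (if Kl c D k l = 0 then t else sinh (t * Kl c D k l) / Kl c D k l)
    else 0)"

definition Bl :: "real \<Rightarrow> real \<Rightarrow> real \<Rightarrow> nat \<Rightarrow> real \<Rightarrow> real" where
  "Bl c D k l t = (if real l > lstar c D k then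
      cos (t * Kl' c D k l) + c^2 / (2 * D * Kl' c D k l) * sin (t * Kl' c D k l)
    else 0)"

definition xi :: "real \<Rightarrow> real \<Rightarrow> real \<Rightarrow> (nat \<Rightarrow> int \<Rightarrow> 'a \<Rightarrow> complex) \<Rightarrow> nat \<Rightarrow> int \<Rightarrow> real \<Rightarrow> 'a \<Rightarrow> complex" where
  "xi c D k a l m t \<omega> = complex_of_real (sqrt (4 * pi / (2 * real l + 1))) * a l m \<omega>
      * cnj (sphY l 0 0 0) * complex_of_real (Al c D k l t + Bl c D k l t)"

definition usum :: "real \<Rightarrow> real \<Rightarrow> real \<Rightarrow> (nat \<Rightarrow> int \<Rightarrow> 'a \<Rightarrow> complex) \<Rightarrow> nat \<Rightarrow> 'a \<Rightarrow> real \<Rightarrow> real \<Rightarrow> real \<Rightarrow> complex" where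
  "usum c D k a L \<omega> \<theta> \<phi> t = complex_of_real (exp (- (c^2 * t) / (2 * D))) *
     (\<Sum>l<L. \<Sum>m\<in>{- int l..int l}. sphY l m \<theta> \<phi> * xi c D k a l m t \<omega>)"

definition L2sq :: "'a measure \<Rightarrow> ('a \<Rightarrow> real \<Rightarrow> real \<Rightarrow> complex) \<Rightarrow> ennreal" where
  "L2sq M X = (\<integral>\<^sup>+ \<omega>. (\<integral>\<^sup>+ \<theta>\<in>{0..<pi}. (\<integral>\<^sup>+ \<phi>\<in>{0..<2*pi}.
       ennreal ((cmod (X \<omega> \<theta> \<phi>))^2 * sin \<theta>) \<partial>lborel) \<partial>lborel) \<partial>M)"

end

theory Submission
  imports Defs "HOL-Computational_Algebra.Polynomial"
begin

lemma deriv_funpow_poly: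
  "(deriv ^^ n) (\<lambda>y. poly p y) = (\<lambda>y. poly ((pderiv ^^ n) p) (y::real))"
proof (induction n)
  case 0 then show ?case by simp
next
  case (Suc n)
  show ?case
    by (simp add: Suc DERIV_imp_deriv[OF poly_DERIV] del: funpow.simps(2)
        | simp add: fun_eq_iff DERIV_imp_deriv[OF poly_DERIV])+
qed

lemma coeff_funpow_pderiv:
  "coeff ((pderiv ^^ n) (p :: real poly)) i = pochhammer (of_nat i + 1) n * coeff p (i + n)"
proof (induction n arbitrary: i p)
  case 0 then show ?case by simp
next
  case (Suc n)
  have "coeff ((pderiv ^^ Suc n) p) i = coeff ((pderiv ^^ n) (pderiv p)) i"
    by (simp only: funpow_Suc_right comp_def)
  also have "\<dots> = pochhammer (of_nat i + 1) n * coeff (pderiv p) (i + n)" by (rule Suc)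
  also have "\<dots> = pochhammer (of_nat i + 1) n * (of_nat (i + n + 1) * coeff p (i + Suc n))"
    by (simp add: coeff_pderiv)
  also have "\<dots> = pochhammer (of_nat i + 1) (Suc n) * coeff p (i + Suc n)"
  proof -
    have "real (i + n + 1) = real i + 1 + real n" by simp
    then show ?thesis by (simp only: pochhammer_Suc mult.assoc)
  qed
  finally show ?case .
qed

lemma degree_funpow_pderiv:
  "degree ((pderiv ^^ n) (p :: real poly)) = degree p - n"
  by (induction n) (auto simp: degree_pderiv)

lemma funpow_pderiv_const:
  assumes "degree (p :: real poly) \<le> n"
  shows "(pderiv ^^ n) p = [: fact n * coeff p n :]"
proof -
  have "degree ((pderiv ^^ n) p) = 0" using assms by (simp add: degree_funpow_pderiv)
  then have "(pderiv ^^ n) p = [: coeff ((pderiv ^^ n) p) 0 :]"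
    by (metis degree_0_id)
  also have "coeff ((pderiv ^^ n) p) 0 = fact n * coeff p n"
    by (simp add: coeff_funpow_pderiv pochhammer_fact)
  finally show ?thesis .
qed

lemma lead_funpow_pderiv:
  assumes "n \<le> degree (p :: real poly)"
  shows "lead_coeff ((pderiv ^^ n) p) = (fact (degree p) / fact (degree p - n)) * lead_coeff p"
proof -
  have "lead_coeff ((pderiv ^^ n) p) = pochhammer (of_nat (degree p - n) + 1) n * coeff p (degree p - n + n)"
    by (simp add: degree_funpow_pderiv coeff_funpow_pderiv)
  also have "pochhammer (of_nat (degree p - n) + 1) n = (fact (degree p) / fact (degree p - n) :: real)"
  proof -
    have "pochhammer (of_nat (degree p - n) + 1) n * fact (degree p - n) = (fact (degree p - n + n) :: real)"
      using pochhammer_product'[of "1::real" "degree p - n" n] assms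
      by (simp add: pochhammer_fact add.commute)
    then show ?thesis using assms by (simp add: field_simps)
  qed
  finally show ?thesis using assms by simp
qed

lemma funpow_pderiv_power_factor:
  fixes B W :: "real poly"
  assumes "j \<le> k"
  shows "\<exists>V. (pderiv ^^ j) (B ^ k * W) = B ^ (k - j) * V \<and>
     (\<forall>x. poly B x = 0 \<longrightarrow> poly V x = (\<Prod>i<j. real (k - i)) * poly (pderiv B) x ^ j * poly W x)"
  using assms
proof (induction j)
  case 0 then show ?case by (intro exI[of _ W]) auto
next
  case (Suc j)
  then obtain V where V: "(pderiv ^^ j) (B ^ k * W) = B ^ (k - j) * V"
    and Vx: "\<forall>x. poly B x = 0 \<longrightarrow> poly V x = (\<Prod>i<j. real (k - i)) * poly (pderiv B) x ^ j * poly W x"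
    by auto
  obtain r where r: "k - j = Suc r" using Suc.prems by (metis Suc_diff_le Suc_le_lessD diff_Suc_Suc zero_less_diff not0_implies_Suc less_numeral_extra(3))
  define V' where "V' = smult (of_nat (Suc r)) (pderiv B * V) + B * pderiv V"
  have "(pderiv ^^ Suc j) (B ^ k * W) = pderiv (B ^ Suc r * V)"
    using V r by simp
  also have "\<dots> = B ^ r * V'"
    unfolding V'_def pderiv_mult pderiv_power_Suc by (simp add: algebra_simps)
  moreover have "k - Suc j = r" using r by arith
  ultimately have e: "(pderiv ^^ Suc j) (B ^ k * W) = B ^ (k - Suc j) * V'" by simp
  have "poly V' x = (\<Prod>i<Suc j. real (k - i)) * poly (pderiv B) x ^ Suc j * poly W x"
    if "poly B x = 0" for x
  proof -
    have "poly V' x = real (Suc r) * poly (pderiv B) x * poly V x" using that by (simp add: V'_def)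
    also have "\<dots> = real (Suc r) * poly (pderiv B) x * ((\<Prod>i<j. real (k - i)) * poly (pderiv B) x ^ j * poly W x)"
      using Vx that by simp
    also have "\<dots> = ((\<Prod>i<j. real (k - i)) * real (k - j)) * poly (pderiv B) x ^ Suc j * poly W x"
      using r by (simp only: mult_ac power_Suc)
    also have "(\<Prod>i<j. real (k - i)) * real (k - j) = (\<Prod>i<Suc j. real (k - i))"
      by (simp only: prod.lessThan_Suc)
    finally show ?thesis .
  qed
  with e show ?case by blast
qed

definition Jint :: "real poly \<Rightarrow> real" where
  "Jint p = integral {-1..1} (poly p)"

lemma integrable_poly [simp]: "poly p integrable_on {a..b::real}"
  by (intro integrable_continuous_interval continuous_intros)

lemma poly_fun_simps:
  fixes p q :: "real poly"
  shows
  "poly (p + q) = (\<lambda>x. poly p x + poly q x)"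
  "poly (p - q) = (\<lambda>x. poly p x - poly q x)"
  "poly (smult c p) = (\<lambda>x. c * poly p x)"
  "poly (- p) = (\<lambda>x. - poly p x)"
  by (auto simp: fun_eq_iff)

lemma Jint_add: "Jint (p + q) = Jint p + Jint q"
  unfolding Jint_def poly_fun_simps by (simp add: integral_add)

lemma Jint_diff: "Jint (p - q) = Jint p - Jint q"
  unfolding Jint_def poly_fun_simps by (simp add: integral_diff)

lemma Jint_smult: "Jint (smult c p) = c * Jint p"
  unfolding Jint_def poly_fun_simps by simp

lemma Jint_minus: "Jint (- p) = - Jint p"
  unfolding Jint_def poly_fun_simps by simp

lemma has_integral_pderiv:
  "(poly (pderiv r) has_integral (poly r b - poly r a)) {a..b::real}" if "a \<le> b"
proof -
  have "((\<lambda>x. poly (pderiv r) x) has_integral (poly r b - poly r a)) {a..b}"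
    by (rule fundamental_theorem_of_calculus[OF that])
       (auto intro!: DERIV_subset[OF poly_DERIV] simp: has_real_derivative_iff_has_vector_derivative[symmetric])
  then show ?thesis by simp
qed

lemma Jint_pderiv: "Jint (pderiv r) = poly r 1 - poly r (-1)"
  unfolding Jint_def using has_integral_pderiv[of "-1" 1 r] by (simp add: integral_unique)

lemma Jint_ibp:
  "Jint (pderiv p * q) = poly p 1 * poly q 1 - poly p (-1) * poly q (-1) - Jint (p * pderiv q)"
proof -
  have "Jint (pderiv (p * q)) = Jint (p * pderiv q) + Jint (pderiv p * q)"
    by (simp add: pderiv_mult Jint_add mult.commute)
  then show ?thesis using Jint_pderiv[of "p * q"] by simp
qed

lemma Jint_ibp_iter:
  assumes "\<forall>j<n. poly ((pderiv ^^ j) Q) 1 = 0 \<and> poly ((pderiv ^^ j) Q) (-1) = 0"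
  shows "Jint ((pderiv ^^ n) Q * S) = (-1) ^ n * Jint (Q * (pderiv ^^ n) S)"
  using assms
proof (induction n arbitrary: S)
  case 0 then show ?case by simp
next
  case (Suc n)
  have z: "poly ((pderiv ^^ n) Q) 1 = 0" "poly ((pderiv ^^ n) Q) (-1) = 0" using Suc.prems by auto
  have "Jint ((pderiv ^^ Suc n) Q * S) = Jint (pderiv ((pderiv ^^ n) Q) * S)" by simp
  also have "\<dots> = - Jint ((pderiv ^^ n) Q * pderiv S)"
    using Jint_ibp[of "(pderiv ^^ n) Q" S] z by simp
  also have "Jint ((pderiv ^^ n) Q * pderiv S) = (-1) ^ n * Jint (Q * (pderiv ^^ n) (pderiv S))"
    using Suc by auto
  also have "(pderiv ^^ n) (pderiv S) = (pderiv ^^ Suc n) S"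
    by (simp only: funpow_Suc_right comp_def)
  finally show ?case by simp
qed

definition "B2 = [:-1, 0, 1:: real:]"
definition "Bm = [:1, 0, -1:: real:]"

lemma poly_B2 [simp]: "poly B2 x = x^2 - 1" by (simp add: B2_def power2_eq_square)
lemma poly_Bm [simp]: "poly Bm x = 1 - x^2" by (simp add: Bm_def power2_eq_square)
lemma degree_B2 [simp]: "degree B2 = 2" by (simp add: B2_def)
lemma lead_B2 [simp]: "lead_coeff B2 = 1" by (simp add: B2_def)
lemma degree_Bm [simp]: "degree Bm = 2" by (simp add: Bm_def)
lemma lead_Bm [simp]: "lead_coeff Bm = -1" by (simp add: Bm_def)
lemma B2_nz [simp]: "B2 \<noteq> 0" by (simp add: B2_def)
lemma Bm_nz [simp]: "Bm \<noteq> 0" by (simp add: Bm_def)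
lemma pderiv_B2: "poly (pderiv B2) x = 2 * x" by (simp add: B2_def pderiv_pCons)

lemma B2_eq: "B2 = - Bm" by (simp add: B2_def Bm_def)

lemma poly_eqI': "(\<And>x. poly p x = poly q (x::real)) \<Longrightarrow> p = q"
  using poly_eq_poly_eq_iff by blast

lemma Q_deriv_zero:
  assumes "j < l"
  shows "poly ((pderiv ^^ j) (B2 ^ l)) 1 = 0 \<and> poly ((pderiv ^^ j) (B2 ^ l)) (-1) = 0"
proof -
  obtain V where V: "(pderiv ^^ j) (B2 ^ l * 1) = B2 ^ (l - j) * V"
    using funpow_pderiv_power_factor[of j l B2 1] assms by auto
  have "l - j > 0" using assms by simp
  then show ?thesis using V by (simp add: power_0_left)
qed

lemma prod_rev_fact: "(\<Prod>i<l. real (l - i)) = fact l"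
  by (simp add: fact_prod_rev atLeast0LessThan)

lemma Q_deriv_at1: "poly ((pderiv ^^ l) (B2 ^ l)) 1 = fact l * 2 ^ l"
proof -
  obtain V where V: "(pderiv ^^ l) (B2 ^ l * 1) = B2 ^ (l - l) * V"
    and Vx: "\<forall>x. poly B2 x = 0 \<longrightarrow> poly V x = (\<Prod>i<l. real (l - i)) * poly (pderiv B2) x ^ l * poly 1 x"
    using funpow_pderiv_power_factor[of l l B2 1] by auto
  have "poly V 1 = fact l * 2 ^ l" using Vx[rule_format, of 1] unfolding prod_rev_fact by (simp add: pderiv_B2)
  then show ?thesis using V by simp
qed

lemma Jint_one: "Jint 1 = 2"
proof -
  have "poly (1::real poly) = (\<lambda>x. 1)" by auto
  then show ?thesis unfolding Jint_def by simp
qed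

lemma Jint_Bm_rec: "Jint (Bm ^ Suc l) = Jint (Bm ^ l) * (2 * real l + 2) / (2 * real l + 3)"
proof -
  define X2 where "X2 = [:0, 0, 1::real:]"
  have e1: "Bm ^ Suc l = Bm ^ l - Bm ^ l * X2"
    by (rule poly_eqI') (simp add: X2_def algebra_simps power2_eq_square)
  have pd: "pderiv (Bm ^ Suc l) = smult (of_nat (Suc l)) (Bm ^ l) * pderiv Bm" by (rule pderiv_power_Suc)
  have pdB: "pderiv Bm = [:0, -2:]" by (simp add: Bm_def pderiv_pCons)
  have e3: "pderiv (Bm ^ Suc l) * [:0, 1:] = smult (-2 * (real l + 1)) (Bm ^ l * X2)"
    unfolding pd pdB by (rule poly_eqI') (simp add: X2_def algebra_simps power2_eq_square del: poly_Bm)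
  have e2: "Jint (pderiv (Bm ^ Suc l) * [:0, 1:]) = - Jint (Bm ^ Suc l)"
    using Jint_ibp[of "Bm ^ Suc l" "[:0, 1:]"] by (simp add: pderiv_pCons)
  have "Jint (Bm ^ Suc l) = Jint (Bm ^ l) - Jint (Bm ^ l * X2)"
    using e1 Jint_diff by metis
  moreover have "-2 * (real l + 1) * Jint (Bm ^ l * X2) = - Jint (Bm ^ Suc l)"
    using e2 e3 Jint_smult by metis
  ultimately show ?thesis by (simp add: field_simps) 
qed

lemma Jint_Bm_aux0:
  fixes F a q u v :: real
  assumes "F \<noteq> 0" "u \<noteq> 0" "v \<noteq> 0"
  shows "q * a^2 / F * v / u = 4 * q * ((v / 2) * a)^2 / (u * v * F)"
  using assms by (simp add: field_simps power2_eq_square)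

lemma Jint_Bm_aux:
  fixes F a :: real
  assumes "F > 0"
  shows "2 ^ (2 * l + 1) * a^2 / F * (2 * real l + 2) / (2 * real l + 3) =
    2 ^ (2 * Suc l + 1) * ((real l + 1) * a)^2 / ((2 * real l + 3) * (2 * real l + 2) * F)"
proof -
  have e: "2 ^ (2 * Suc l + 1) = 4 * (2::real) ^ (2 * l + 1)" by simp
  have e2: "real l + 1 = (2 * real l + 2) / 2" by simp
  show ?thesis unfolding e e2
    by (rule Jint_Bm_aux0) (use assms in auto)
qed

lemma Jint_Bm: "Jint (Bm ^ l) = 2 ^ (2 * l + 1) * (fact l)^2 / fact (2 * l + 1)"
proof (induction l)
  case 0 then show ?case by (simp add: Jint_one)
next
  case (Suc l)
  have f: "fact (2 * Suc l + 1) = (2 * real l + 3) * (2 * real l + 2) * (fact (2 * l + 1) :: real)"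
  proof -
    have "2 * Suc l + 1 = Suc (Suc (2 * l + 1))" by simp
    then have "fact (2 * Suc l + 1) = (real (Suc (Suc (2 * l + 1)))) * (real (Suc (2 * l + 1)) * (fact (2 * l + 1) :: real))"
      by (simp only: fact_Suc of_nat_mult)
    then show ?thesis by (simp add: algebra_simps)
  qed
  have g: "fact (Suc l) = (real l + 1) * (fact l :: real)" by simp
  have "Jint (Bm ^ Suc l) = 2 ^ (2 * l + 1) * (fact l)^2 / fact (2 * l + 1) * (2 * real l + 2) / (2 * real l + 3)"
    using Jint_Bm_rec Suc by simp
  also have "\<dots> = 2 ^ (2 * Suc l + 1) * (fact (Suc l))^2 / fact (2 * Suc l + 1)"
    unfolding f g by (rule Jint_Bm_aux) simp
  finally show ?case .
qed

lemma Jint_ibp_gen: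
  assumes "\<forall>i<n. poly ((pderiv ^^ (n - 1 - i)) Q) 1 * poly ((pderiv ^^ i) S) 1 = 0 \<and>
                 poly ((pderiv ^^ (n - 1 - i)) Q) (-1) * poly ((pderiv ^^ i) S) (-1) = 0"
  shows "Jint ((pderiv ^^ n) Q * S) = (-1) ^ n * Jint (Q * (pderiv ^^ n) S)"
  using assms
proof (induction n arbitrary: S)
  case 0 then show ?case by simp
next
  case (Suc n)
  have z: "poly ((pderiv ^^ n) Q) 1 * poly S 1 = 0" "poly ((pderiv ^^ n) Q) (-1) * poly S (-1) = 0"
    using Suc.prems[rule_format, of 0] by auto
  have pS: "(pderiv ^^ i) (pderiv S) = (pderiv ^^ Suc i) S" for i
    by (simp only: funpow_Suc_right comp_def)
  have "Jint ((pderiv ^^ Suc n) Q * S) = Jint (pderiv ((pderiv ^^ n) Q) * S)" by simp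
  also have "\<dots> = - Jint ((pderiv ^^ n) Q * pderiv S)"
    using Jint_ibp[of "(pderiv ^^ n) Q" S] z by simp
  also have "Jint ((pderiv ^^ n) Q * pderiv S) = (-1) ^ n * Jint (Q * (pderiv ^^ n) (pderiv S))"
  proof (rule Suc.IH, intro allI impI)
    fix i assume "i < n"
    then show "poly ((pderiv ^^ (n - 1 - i)) Q) 1 * poly ((pderiv ^^ i) (pderiv S)) 1 = 0 \<and>
          poly ((pderiv ^^ (n - 1 - i)) Q) (- 1) * poly ((pderiv ^^ i) (pderiv S)) (- 1) = 0"
      using Suc.prems[rule_format, of "Suc i"] unfolding pS by simp
  qed
  also have "(pderiv ^^ n) (pderiv S) = (pderiv ^^ Suc n) S" by (rule pS)
  finally show ?case by simp
qed

lemma degree_Q: "degree (B2 ^ l) = 2 * l" by (simp add: degree_power_eq)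
lemma lead_Q: "lead_coeff (B2 ^ l) = 1" by (simp only: lead_coeff_power lead_B2 power_one)
lemma lead_Q': "coeff (B2 ^ l) (2 * l) = 1" using lead_Q[of l] by (simp only: degree_Q)

lemma P_degree_lead:
  assumes "n \<le> 2 * l"
  shows "degree ((pderiv ^^ n) (B2 ^ l)) = 2 * l - n"
    "lead_coeff ((pderiv ^^ n) (B2 ^ l)) = fact (2 * l) / fact (2 * l - n)"
proof -
  show "degree ((pderiv ^^ n) (B2 ^ l)) = 2 * l - n" by (simp add: degree_funpow_pderiv degree_Q)
  have "lead_coeff ((pderiv ^^ n) (B2 ^ l)) = fact (degree (B2 ^ l)) / fact (degree (B2 ^ l) - n) * lead_coeff (B2 ^ l)"
    by (rule lead_funpow_pderiv) (simp add: degree_Q assms)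
  then show "lead_coeff ((pderiv ^^ n) (B2 ^ l)) = fact (2 * l) / fact (2 * l - n)"
    by (simp only: degree_Q lead_Q' mult_1_right)
qed

lemma P_nz:
  assumes "n \<le> 2 * l"
  shows "(pderiv ^^ n) (B2 ^ l) \<noteq> 0"
  using P_degree_lead(2)[OF assms] by auto

lemma S_exists:
  assumes "\<bar>m\<bar> \<le> int l"
  defines "n \<equiv> nat (int l + m)"
  defines "P \<equiv> (pderiv ^^ n) (B2 ^ l)"
  shows "\<exists>S. degree S \<le> n \<and> coeff S n = (-1) ^ nat \<bar>m\<bar> * fact (2 * l) / fact (nat (int l - m)) \<and>
     (\<forall>i. i < n - l \<longrightarrow> poly ((pderiv ^^ i) S) 1 = 0 \<and> poly ((pderiv ^^ i) S) (-1) = 0) \<and>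
     (\<forall>x. -1 < x \<and> x < 1 \<longrightarrow> (1 - x^2) powi m * (poly P x)^2 = poly (P * S) x)"
proof (cases "m \<ge> 0")
  case True
  define mm where "mm = nat m"
  have m: "m = int mm" using True by (simp add: mm_def)
  have n: "n = l + mm" using m by (simp add: n_def)
  have nle: "n \<le> 2 * l" using assms(1) m n by simp
  define S where "S = Bm ^ mm * P"
  have dP: "degree P = l - mm" and lP: "lead_coeff P = fact (2 * l) / fact (l - mm)"
    using P_degree_lead[OF nle] n by (auto simp: P_def)
  have dB: "degree (Bm ^ mm) = 2 * mm" by (simp add: degree_power_eq)
  have lB: "lead_coeff (Bm ^ mm) = (-1) ^ mm" by (simp only: lead_coeff_power lead_Bm)
  have "degree S \<le> n" using degree_mult_le[of "Bm ^ mm" P] dB dP n assms(1) m unfolding S_def by simp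
  moreover have "coeff S n = (-1) ^ nat \<bar>m\<bar> * fact (2 * l) / fact (nat (int l - m))"
  proof -
    have "n = degree (Bm ^ mm) + degree P" using dB dP n assms(1) m by simp
    then have "coeff S n = lead_coeff (Bm ^ mm) * lead_coeff P" unfolding S_def
      by (simp only: coeff_mult_degree_sum)
    also have "nat (int l - m) = l - mm" using m by simp
    ultimately show ?thesis using lB lP m by simp
  qed
  moreover have "poly ((pderiv ^^ i) S) 1 = 0 \<and> poly ((pderiv ^^ i) S) (-1) = 0" if "i < n - l" for i
  proof -
    have "i \<le> mm" using that n by simp
    then obtain V where V: "(pderiv ^^ i) (Bm ^ mm * P) = Bm ^ (mm - i) * V"
      using funpow_pderiv_power_factor[of i mm Bm P] by blast
    have "mm - i > 0" using that n by simp
    then show ?thesis using V unfolding S_def by (simp add: power_0_left)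
  qed
  moreover have "(1 - x^2) powi m * (poly P x)^2 = poly (P * S) x" for x
    unfolding S_def m by (simp add: power2_eq_square poly_power)
  ultimately show ?thesis by blast
next
  case False
  define p where "p = nat (- m)"
  have m: "m = - int p" "p > 0" using False by (auto simp: p_def)
  have n: "n = l - p" "p \<le> l" using m assms(1) by (auto simp: n_def)
  have nle: "n \<le> 2 * l" using n by simp
  obtain V where V: "(pderiv ^^ n) (B2 ^ l * 1) = B2 ^ (l - n) * V"
    using funpow_pderiv_power_factor[of n l B2 1] n by auto
  have PV: "P = B2 ^ p * V" using V n unfolding P_def by simp
  have dP: "degree P = l + p" and lP: "lead_coeff P = fact (2 * l) / fact (l + p)"
    using P_degree_lead[OF nle] n by (auto simp: P_def)
  have Pnz: "P \<noteq> 0" using P_nz[OF nle] by (simp add: P_def)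
  then have Vnz: "V \<noteq> 0" using PV by auto
  have "degree P = 2 * p + degree V" using PV Vnz by (simp add: degree_mult_eq degree_power_eq)
  then have dV: "degree V = n" using dP n by simp
  have lV: "lead_coeff V = fact (2 * l) / fact (l + p)"
  proof -
    have "lead_coeff P = lead_coeff (B2 ^ p) * lead_coeff V" unfolding PV by (rule lead_coeff_mult)
    also have "lead_coeff (B2 ^ p) = 1" by (rule lead_Q)
    finally show ?thesis using lP by simp
  qed
  define S where "S = smult ((-1) ^ p) V"
  have "degree S \<le> n" using dV by (simp add: S_def)
  moreover have "coeff S n = (-1) ^ nat \<bar>m\<bar> * fact (2 * l) / fact (nat (int l - m))"
  proof -
    have "nat \<bar>m\<bar> = p" "nat (int l - m) = l + p" using m by auto
    then show ?thesis using lV dV by (simp add: S_def p_def)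
  qed
  moreover have "\<forall>i. i < n - l \<longrightarrow> poly ((pderiv ^^ i) S) 1 = 0 \<and> poly ((pderiv ^^ i) S) (-1) = 0"
    using n by simp
  moreover have "(1 - x^2) powi m * (poly P x)^2 = poly (P * S) x" if "-1 < x \<and> x < 1" for x
  proof -
    define s where "s = 1 - x^2"
    have "\<bar>x\<bar> < 1" using that by auto
    then have "x^2 < 1" by (simp add: abs_square_less_1)
    then have s0: "s \<noteq> 0" by (simp add: s_def)
    have pw: "(1 - x^2) powi m = inverse s ^ p" using m by (simp add: s_def power_int_def)
    have b2: "poly B2 x = - s" by (simp add: s_def)
    have "(1 - x^2) powi m * (poly P x)^2 = inverse s ^ p * ((-s) ^ p) ^ 2 * (poly V x)^2"
      unfolding pw PV by (simp add: b2 poly_power power_mult_distrib del: poly_B2)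
    also have "((-s) ^ p) ^ 2 = (s ^ p) ^ 2"
      by (simp add: power_minus[of s] power_mult_distrib power_even_eq[symmetric] mult.commute power_mult[symmetric])
    also have "inverse s ^ p * (s ^ p) ^ 2 = s ^ p" using s0
      by (simp add: power2_eq_square power_inverse field_simps)
    also have "s ^ p * (poly V x)^2 = poly (P * S) x"
      by (simp add: PV S_def poly_power b2 power2_eq_square power_minus[of s] mult_ac del: poly_B2)
    finally show ?thesis .
  qed
  ultimately show ?thesis by blast
qed

lemma frac_aux:
  fixes a b u F G :: real
  assumes "F \<noteq> 0" "u \<noteq> 0" "G \<noteq> 0"
  shows "a * F / G * (b / (u * F)) = a * b / (u * G)"
  using assms by (simp add: field_simps)

lemma Jint_PS:
  assumes "\<bar>m\<bar> \<le> int l"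
  defines "n \<equiv> nat (int l + m)"
  defines "P \<equiv> (pderiv ^^ n) (B2 ^ l)"
  assumes S: "degree S \<le> n" "coeff S n = (-1) ^ nat \<bar>m\<bar> * fact (2 * l) / fact (nat (int l - m))"
     "\<forall>i. i < n - l \<longrightarrow> poly ((pderiv ^^ i) S) 1 = 0 \<and> poly ((pderiv ^^ i) S) (-1) = 0"
  shows "Jint (P * S) = fact n * 2 ^ (2 * l + 1) * (fact l)^2 / ((2 * real l + 1) * fact (nat (int l - m)))"
proof -
  have bd: "\<forall>i<n. poly ((pderiv ^^ (n - 1 - i)) (B2 ^ l)) 1 * poly ((pderiv ^^ i) S) 1 = 0 \<and>
                 poly ((pderiv ^^ (n - 1 - i)) (B2 ^ l)) (-1) * poly ((pderiv ^^ i) S) (-1) = 0"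
  proof (intro allI impI)
    fix i assume i: "i < n"
    show "poly ((pderiv ^^ (n - 1 - i)) (B2 ^ l)) 1 * poly ((pderiv ^^ i) S) 1 = 0 \<and>
          poly ((pderiv ^^ (n - 1 - i)) (B2 ^ l)) (-1) * poly ((pderiv ^^ i) S) (-1) = 0"
    proof (cases "i < n - l")
      case True then show ?thesis using S(3) by simp
    next
      case False
      then have "n - 1 - i < l" using i by linarith
      then show ?thesis using Q_deriv_zero by simp
    qed
  qed
  have "Jint (P * S) = (-1) ^ n * Jint (B2 ^ l * (pderiv ^^ n) S)"
    unfolding P_def by (rule Jint_ibp_gen[OF bd])
  also have "(pderiv ^^ n) S = [: fact n * coeff S n :]" by (rule funpow_pderiv_const[OF S(1)])
  also have "B2 ^ l * [: fact n * coeff S n :] = smult (fact n * coeff S n * (-1) ^ l) (Bm ^ l)"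
    by (rule poly_eqI') (simp add: poly_power B2_eq power_minus[of "poly Bm _"] mult_ac del: poly_Bm)
  finally have e: "Jint (P * S) = (-1) ^ n * (fact n * coeff S n * (-1) ^ l) * Jint (Bm ^ l)"
    by (simp add: Jint_smult)
  have sgn: "(-1::real) ^ n * (-1) ^ nat \<bar>m\<bar> * (-1) ^ l = 1"
  proof -
    have "n + nat \<bar>m\<bar> + l = (if m \<ge> 0 then 2 * (l + nat m) else 2 * l)"
      using assms(1) unfolding n_def by auto
    then have "even (n + nat \<bar>m\<bar> + l)" by simp
    then show ?thesis by (simp add: power_add[symmetric])
  qed
  have ff: "fact (2 * l + 1) = (2 * real l + 1) * (fact (2 * l) :: real)"
    by (simp add: algebra_simps)
  have "Jint (P * S) = ((-1) ^ n * (-1) ^ nat \<bar>m\<bar> * (-1) ^ l) * (fact n * fact (2 * l) / fact (nat (int l - m)) *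
      (2 ^ (2 * l + 1) * (fact l)^2 / fact (2 * l + 1)))"
    unfolding e S(2) Jint_Bm by (simp add: mult_ac)
  also have "\<dots> = fact n * fact (2 * l) / fact (nat (int l - m)) *
      (2 ^ (2 * l + 1) * (fact l)^2 / ((2 * real l + 1) * fact (2 * l)))"
    unfolding sgn ff by simp
  also have "\<dots> = fact n * (2 ^ (2 * l + 1) * (fact l)^2) / ((2 * real l + 1) * fact (nat (int l - m)))"
    by (rule frac_aux) auto
  also have "\<dots> = fact n * 2 ^ (2 * l + 1) * (fact l)^2 / ((2 * real l + 1) * fact (nat (int l - m)))"
    by (simp only: mult.assoc)
  finally show ?thesis .
qed

lemma legendreP_poly:
  "legendreP l m x = 1 / (2 ^ l * fact l) * (sqrt (1 - x^2) powi m) * poly ((pderiv ^^ nat (int l + m)) (B2 ^ l)) x"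
proof -
  have e: "(\<lambda>y. (y^2 - 1) ^ l) = (\<lambda>y. poly (B2 ^ l) y)" by (simp add: fun_eq_iff poly_power)
  show ?thesis unfolding legendreP_def e deriv_funpow_poly by simp
qed

lemma legendreP_l0_1: "legendreP l 0 1 = 1"
  unfolding legendreP_poly using Q_deriv_at1[of l] by simp

lemma legendreP_sq:
  assumes "\<bar>m\<bar> \<le> int l"
  shows "\<exists>R. (\<forall>x. -1 < x \<and> x < 1 \<longrightarrow> (legendreP l m x)^2 = poly R x) \<and>
      Jint R = 2 * fact (nat (int l + m)) / ((2 * real l + 1) * fact (nat (int l - m)))"
proof -
  define n where "n = nat (int l + m)"
  define P where "P = (pderiv ^^ n) (B2 ^ l)"
  obtain S where S: "degree S \<le> n" "coeff S n = (-1) ^ nat \<bar>m\<bar> * fact (2 * l) / fact (nat (int l - m))"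
     "\<forall>i. i < n - l \<longrightarrow> poly ((pderiv ^^ i) S) 1 = 0 \<and> poly ((pderiv ^^ i) S) (-1) = 0"
     "\<forall>x. -1 < x \<and> x < 1 \<longrightarrow> (1 - x^2) powi m * (poly P x)^2 = poly (P * S) x"
    using S_exists[OF assms] unfolding n_def P_def by blast
  have J: "Jint (P * S) = fact n * 2 ^ (2 * l + 1) * (fact l)^2 / ((2 * real l + 1) * fact (nat (int l - m)))"
    unfolding P_def n_def by (rule Jint_PS[OF assms S(1-3)[unfolded n_def]])
  define c where "c = (1 / (2 ^ l * fact l :: real))^2"
  define R where "R = smult c (P * S)"
  have "(legendreP l m x)^2 = poly R x" if x: "-1 < x \<and> x < 1" for x
  proof -
    have "\<bar>x\<bar> < 1" using x by auto
    then have "x^2 < 1" by (simp add: abs_square_less_1)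
    then have s: "1 - x^2 \<ge> 0" by simp
    have "(sqrt (1 - x^2) powi m)^2 = (1 - x^2) powi m"
    proof -
      have "(sqrt (1 - x^2) powi m)^2 = sqrt (1 - x^2) powi (m * 2)" by (simp add: power_int_power')
      also have "\<dots> = (sqrt (1 - x^2) ^ 2) powi m" by (simp add: power_int_power mult.commute)
      also have "sqrt (1 - x^2) ^ 2 = 1 - x^2" using s by simp
      finally show ?thesis .
    qed
    moreover have "(legendreP l m x)^2 = (1 / (2 ^ l * fact l))^2 * (sqrt (1 - x^2) powi m)^2 * (poly P x)^2"
      unfolding legendreP_poly P_def n_def by (simp only: power_mult_distrib)
    ultimately have "(legendreP l m x)^2 = c * ((1 - x^2) powi m * (poly P x)^2)"
      unfolding c_def by simp
    also have "\<dots> = poly R x" using S(4) x by (simp add: R_def)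
    finally show ?thesis .
  qed
  moreover have "Jint R = 2 * fact (nat (int l + m)) / ((2 * real l + 1) * fact (nat (int l - m)))"
  proof -
    have "Jint R = c * Jint (P * S)" by (simp add: R_def Jint_smult)
    also have "\<dots> = 2 * fact n / ((2 * real l + 1) * fact (nat (int l - m)))"
      unfolding J c_def by (simp add: field_simps power_mult_distrib power_mult[symmetric] power_add)
    finally show ?thesis by (simp add: n_def)
  qed
  ultimately show ?thesis by blast
qed

lemma exists_antideriv: "\<exists>G. pderiv G = (R :: real poly)"
proof -
  define G where "G = (\<Sum>i\<le>degree R. monom (coeff R i / real (Suc i)) (Suc i))"
  have "pderiv G = (\<Sum>i\<le>degree R. pderiv (monom (coeff R i / real (Suc i)) (Suc i)))"
    unfolding G_def using higher_pderiv_sum[of 1] by simp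
  also have "\<dots> = (\<Sum>i\<le>degree R. monom (coeff R i) i)" by (intro sum.cong refl) (simp add: pderiv_monom)
  also have "\<dots> = R" by (rule poly_as_sum_of_monoms)
  finally show ?thesis by blast
qed

lemma theta_has_integral: "((\<lambda>\<theta>. poly R (cos \<theta>) * sin \<theta>) has_integral Jint R) {0..pi}"
proof -
  obtain G where G: "pderiv G = R" using exists_antideriv by blast
  have d: "((\<lambda>\<theta>. - poly G (cos \<theta>)) has_real_derivative (poly R (cos \<theta>) * sin \<theta>)) (at \<theta> within {0..pi})" for \<theta>
  proof -
    have "((\<lambda>\<theta>. poly G (cos \<theta>)) has_real_derivative (poly (pderiv G) (cos \<theta>) * (- sin \<theta>))) (at \<theta>)"
      by (rule DERIV_chain2[OF poly_DERIV DERIV_cos])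
    then have "((\<lambda>\<theta>. - poly G (cos \<theta>)) has_real_derivative - (poly (pderiv G) (cos \<theta>) * (- sin \<theta>))) (at \<theta>)"
      by (rule DERIV_minus)
    then show ?thesis using G by (simp add: has_field_derivative_at_within)
  qed
  have "((\<lambda>\<theta>. poly R (cos \<theta>) * sin \<theta>) has_integral ((- poly G (cos pi)) - (- poly G (cos 0)))) {0..pi}"
    by (rule fundamental_theorem_of_calculus) (auto simp: has_real_derivative_iff_has_vector_derivative[symmetric] intro: d)
  moreover have "(- poly G (cos pi)) - (- poly G (cos 0)) = Jint R"
    using Jint_pderiv[of G] G by simp
  ultimately show ?thesis by simp
qed

lemma cos_in_open:
  assumes "0 < \<theta>" "\<theta> < pi"
  shows "-1 < cos \<theta> \<and> cos \<theta> < 1"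
proof -
  have "cos \<theta> < cos 0" using cos_monotone_0_pi[of 0 \<theta>] assms by simp
  moreover have "cos pi < cos \<theta>" using cos_monotone_0_pi[of \<theta> pi] assms by simp
  ultimately show ?thesis by simp
qed

lemma nn_theta:
  fixes f :: "real \<Rightarrow> real"
  assumes c: "c \<ge> 0" and R: "\<And>x. -1 < x \<Longrightarrow> x < 1 \<Longrightarrow> poly R x \<ge> 0"
    and f: "\<And>\<theta>. 0 < \<theta> \<Longrightarrow> \<theta> < pi \<Longrightarrow> f \<theta> = c * poly R (cos \<theta>) * sin \<theta>" and f0: "f 0 = 0"
  shows "(\<integral>\<^sup>+\<theta>\<in>{0..<pi}. ennreal (f \<theta>) \<partial>lborel) = ennreal (c * Jint R)"
proof -
  define g where "g \<theta> = c * poly R (cos \<theta>) * sin \<theta>" for \<theta>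
  have gnn: "0 \<le> g \<theta>" if "\<theta> \<in> {0..pi}" for \<theta>
  proof (cases "\<theta> = 0 \<or> \<theta> = pi")
    case True then show ?thesis by (auto simp: g_def)
  next
    case False
    then have "0 < \<theta>" "\<theta> < pi" using that by auto
    then show ?thesis using cos_in_open[of \<theta>] R[of "cos \<theta>"] c sin_gt_zero[of \<theta>] by (auto simp: g_def)
  qed
  have gi: "(g has_integral (c * Jint R)) {0..pi}"
    unfolding g_def using has_integral_mult_right[OF theta_has_integral[of R], of c] by (simp add: mult_ac)
  have "(\<integral>\<^sup>+\<theta>. ennreal (g \<theta>) * indicator {0..pi} \<theta> \<partial>lborel) = ennreal (c * Jint R)"
    by (rule nn_integral_has_integral_lebesgue'[OF gnn gi])
  moreover have "(\<integral>\<^sup>+\<theta>\<in>{0..<pi}. ennreal (f \<theta>) \<partial>lborel) = (\<integral>\<^sup>+\<theta>. ennreal (g \<theta>) * indicator {0..pi} \<theta> \<partial>lborel)"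
  proof (rule nn_integral_cong_AE)
    show "AE \<theta> in lborel. ennreal (f \<theta>) * indicator {0..<pi} \<theta> = ennreal (g \<theta>) * indicator {0..pi} \<theta>"
      using AE_lborel_singleton[of pi]
    proof eventually_elim
      case (elim \<theta>)
      show ?case
      proof (cases "0 < \<theta> \<and> \<theta> < pi")
        case True then show ?thesis using f[of \<theta>] by (simp add: g_def indicator_def)
      next
        case False
        then have "\<theta> = 0 \<or> \<theta> \<notin> {0..pi}" using elim by auto
        then show ?thesis using f0 by (auto simp: g_def indicator_def)
      qed
    qed
  qed
  ultimately show ?thesis by simp
qed

lemma cmod_sphY: "cmod (sphY l m \<theta> \<phi>) = \<bar>dlm l m * legendreP l m (cos \<theta>)\<bar>"
proof -
  have "\<i> * of_int m * of_real \<phi> = \<i> * of_real (real_of_int m * \<phi>)" by simp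
  then show ?thesis unfolding sphY_def by (simp only: norm_mult norm_exp_i_times norm_of_real)
qed

lemma dlm_sq: "\<bar>m\<bar> \<le> int l \<Longrightarrow> (dlm l m)^2 = (2 * real l + 1) * fact (nat (int l - m)) / (4 * pi * fact (nat (int l + m)))"
proof -
  have "((-1::real) ^ nat \<bar>m\<bar>)^2 = 1" by (simp add: power2_eq_square power_mult_distrib[symmetric])
  then show "\<bar>m\<bar> \<le> int l \<Longrightarrow> ?thesis" unfolding dlm_def by (simp add: power_mult_distrib)
qed

lemma sph_aux:
  fixes u F1 F2 :: real
  assumes "u > 0" "F1 > 0" "F2 > 0"
  shows "2 * pi * (u * F1 / (4 * pi * F2)) * (2 * F2 / (u * F1)) = 1"
  using assms pi_gt_zero by (simp add: field_simps)

lemma sph_norm: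
  assumes "\<bar>m\<bar> \<le> int l"
  shows "(\<integral>\<^sup>+\<theta>\<in>{0..<pi}. (\<integral>\<^sup>+\<phi>\<in>{0..<2*pi}. ennreal ((cmod (sphY l m \<theta> \<phi>))^2 * sin \<theta>) \<partial>lborel) \<partial>lborel) = 1"
proof -
  obtain R where R: "\<And>x. -1 < x \<and> x < 1 \<Longrightarrow> (legendreP l m x)^2 = poly R x"
    and JR: "Jint R = 2 * fact (nat (int l + m)) / ((2 * real l + 1) * fact (nat (int l - m)))"
    using legendreP_sq[OF assms] by blast
  define c where "c = 2 * pi * (dlm l m)^2"
  define f where "f \<theta> = c * (legendreP l m (cos \<theta>))^2 * sin \<theta>" for \<theta>
  have inner: "(\<integral>\<^sup>+\<phi>\<in>{0..<2*pi}. ennreal ((cmod (sphY l m \<theta> \<phi>))^2 * sin \<theta>) \<partial>lborel) = ennreal (f \<theta>)" for \<theta>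
  proof -
    have "(\<integral>\<^sup>+\<phi>\<in>{0..<2*pi}. ennreal ((cmod (sphY l m \<theta> \<phi>))^2 * sin \<theta>) \<partial>lborel)
        = (\<integral>\<^sup>+\<phi>. ennreal ((dlm l m * legendreP l m (cos \<theta>))^2 * sin \<theta>) * indicator {0..<2*pi} \<phi> \<partial>lborel)"
      by (simp add: cmod_sphY)
    also have "\<dots> = ennreal ((dlm l m * legendreP l m (cos \<theta>))^2 * sin \<theta>) * emeasure lborel {0..<2*pi}"
      by (rule nn_integral_cmult_indicator) simp
    also have "\<dots> = ennreal ((dlm l m * legendreP l m (cos \<theta>))^2 * sin \<theta>) * ennreal (2 * pi)"
      by simp
    also have "\<dots> = ennreal (2 * pi * ((dlm l m * legendreP l m (cos \<theta>))^2 * sin \<theta>))"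
      by (subst ennreal_mult') (auto simp: mult.commute)
    also have "\<dots> = ennreal (f \<theta>)" by (simp add: f_def c_def power_mult_distrib mult_ac)
    finally show ?thesis .
  qed
  have "(\<integral>\<^sup>+\<theta>\<in>{0..<pi}. ennreal (f \<theta>) \<partial>lborel) = ennreal (c * Jint R)"
  proof (rule nn_theta)
    show "0 \<le> c" by (simp add: c_def)
    show "poly R x \<ge> 0" if "-1 < x" "x < 1" for x using R[of x] that by (metis zero_le_power2)
    show "f \<theta> = c * poly R (cos \<theta>) * sin \<theta>" if "0 < \<theta>" "\<theta> < pi" for \<theta>
      using R[of "cos \<theta>"] cos_in_open[OF that] by (simp add: f_def)
    show "f 0 = 0" by (simp add: f_def)
  qed
  also have "c * Jint R = 1"
    unfolding c_def JR dlm_sq[OF assms] by (rule sph_aux) auto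
  finally show ?thesis by (simp add: inner)
qed

lemma borel_measurable_cnj' [measurable]:
  "f \<in> borel_measurable M \<Longrightarrow> (\<lambda>x. cnj (f x)) \<in> borel_measurable M"
proof -
  have "(cnj :: complex \<Rightarrow> complex) \<in> borel_measurable borel"
    by (intro borel_measurable_continuous_onI continuous_intros)
  then show "f \<in> borel_measurable M \<Longrightarrow> (\<lambda>x. cnj (f x)) \<in> borel_measurable M"
    using measurable_compose by blast
qed

lemma igf:
  assumes "iso_gauss_field M a Cl"
  shows igf_prob: "prob_space M"
    and igf_meas: "\<And>l m. \<bar>m\<bar> \<le> int l \<Longrightarrow> a l m \<in> borel_measurable M"
    and igf_sq: "\<And>l m. \<bar>m\<bar> \<le> int l \<Longrightarrow> integrable M (\<lambda>\<omega>. (cmod (a l m \<omega>))^2)"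
    and igf_cov: "\<And>l m l' m'. \<bar>m\<bar> \<le> int l \<Longrightarrow> \<bar>m'\<bar> \<le> int l' \<Longrightarrow>
        integral\<^sup>L M (\<lambda>\<omega>. a l m \<omega> * cnj (a l' m' \<omega>)) =
          (if l = l' \<and> m = m' then complex_of_real (Cl l) else 0)"
    and igf_summable: "summable (\<lambda>l. (2 * real l + 1) * Cl l)"
  using assms unfolding iso_gauss_field_def by auto

lemma prod_integrable:
  assumes "iso_gauss_field M a Cl" "\<bar>m\<bar> \<le> int l" "\<bar>m'\<bar> \<le> int l'"
  shows "integrable M (\<lambda>\<omega>. a l m \<omega> * cnj (a l' m' \<omega>))"
proof (rule Bochner_Integration.integrable_bound[where f="\<lambda>\<omega>. (cmod (a l m \<omega>))^2 + (cmod (a l' m' \<omega>))^2"])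
  show "integrable M (\<lambda>\<omega>. (cmod (a l m \<omega>))^2 + (cmod (a l' m' \<omega>))^2)"
    using igf_sq[OF assms(1)] assms(2,3) by auto
  show "(\<lambda>\<omega>. a l m \<omega> * cnj (a l' m' \<omega>)) \<in> borel_measurable M"
    using igf_meas[OF assms(1)] assms(2,3) by measurable
  show "AE \<omega> in M. norm (a l m \<omega> * cnj (a l' m' \<omega>)) \<le> norm ((cmod (a l m \<omega>))^2 + (cmod (a l' m' \<omega>))^2)"
  proof (intro AE_I2)
    fix \<omega>
    define x where "x = cmod (a l m \<omega>)"
    define y where "y = cmod (a l' m' \<omega>)"
    have "0 \<le> (x - y)^2" by simp
    then have "x * y \<le> x^2 + y^2" using x_def y_def
      by (simp add: power2_eq_square algebra_simps) (smt (verit) mult_nonneg_nonneg norm_ge_zero)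
    then show "norm (a l m \<omega> * cnj (a l' m' \<omega>)) \<le> norm ((cmod (a l m \<omega>))^2 + (cmod (a l' m' \<omega>))^2)"
      by (simp add: norm_mult x_def y_def)
  qed
qed

lemma Cl_nonneg:
  assumes "iso_gauss_field M a Cl"
  shows "Cl l \<ge> 0"
proof -
  have "integral\<^sup>L M (\<lambda>\<omega>. a l 0 \<omega> * cnj (a l 0 \<omega>)) = complex_of_real (Cl l)"
    using igf_cov[OF assms, of 0 l 0 l] by simp
  moreover have "integral\<^sup>L M (\<lambda>\<omega>. a l 0 \<omega> * cnj (a l 0 \<omega>)) = integral\<^sup>L M (\<lambda>\<omega>. complex_of_real ((cmod (a l 0 \<omega>))^2))"
    by (simp only: complex_norm_square)
  moreover have "\<dots> = complex_of_real (integral\<^sup>L M (\<lambda>\<omega>. (cmod (a l 0 \<omega>))^2))"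
    by (rule integral_complex_of_real)
  ultimately have "Cl l = integral\<^sup>L M (\<lambda>\<omega>. (cmod (a l 0 \<omega>))^2)" by simp
  then show ?thesis by simp
qed

lemma expect_sq:
  assumes field: "iso_gauss_field M a Cl" and I: "finite I" "\<forall>i\<in>I. \<bar>snd i\<bar> \<le> int (fst i)"
  shows "(\<integral>\<^sup>+\<omega>. ennreal ((cmod (\<Sum>i\<in>I. w i * a (fst i) (snd i) \<omega>))^2) \<partial>M) =
         ennreal (\<Sum>i\<in>I. (cmod (w i))^2 * Cl (fst i))"
proof -
  define Z where "Z \<omega> = (\<Sum>i\<in>I. w i * a (fst i) (snd i) \<omega>)" for \<omega>
  have measZ: "Z \<in> borel_measurable M"
    unfolding Z_def using igf_meas[OF field] I(2)
    by (intro borel_measurable_sum borel_measurable_times borel_measurable_const) auto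
  have ZZ: "Z \<omega> * cnj (Z \<omega>) = (\<Sum>i\<in>I. \<Sum>j\<in>I. (w i * cnj (w j)) * (a (fst i) (snd i) \<omega> * cnj (a (fst j) (snd j) \<omega>)))" for \<omega>
    unfolding Z_def cnj_sum sum_product by (intro sum.cong refl) (simp add: mult_ac)
  have intij: "integrable M (\<lambda>\<omega>. a (fst i) (snd i) \<omega> * cnj (a (fst j) (snd j) \<omega>))" if "i \<in> I" "j \<in> I" for i j
    using prod_integrable[OF field, of "snd i" "fst i" "snd j" "fst j"] I(2) that by auto
  have intZZ: "integrable M (\<lambda>\<omega>. Z \<omega> * cnj (Z \<omega>))"
    unfolding ZZ by (auto intro!: integrable_sum integrable_mult_right intij)
  have "integral\<^sup>L M (\<lambda>\<omega>. Z \<omega> * cnj (Z \<omega>)) =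
      (\<Sum>i\<in>I. \<Sum>j\<in>I. (w i * cnj (w j)) * integral\<^sup>L M (\<lambda>\<omega>. a (fst i) (snd i) \<omega> * cnj (a (fst j) (snd j) \<omega>)))"
  proof -
    have "integral\<^sup>L M (\<lambda>\<omega>. Z \<omega> * cnj (Z \<omega>)) = (\<Sum>i\<in>I. integral\<^sup>L M (\<lambda>\<omega>. \<Sum>j\<in>I. (w i * cnj (w j)) * (a (fst i) (snd i) \<omega> * cnj (a (fst j) (snd j) \<omega>))))"
      unfolding ZZ by (rule Bochner_Integration.integral_sum) (auto intro!: integrable_sum integrable_mult_right intij)
    also have "\<dots> = (\<Sum>i\<in>I. \<Sum>j\<in>I. integral\<^sup>L M (\<lambda>\<omega>. (w i * cnj (w j)) * (a (fst i) (snd i) \<omega> * cnj (a (fst j) (snd j) \<omega>))))"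
      by (intro sum.cong refl Bochner_Integration.integral_sum) (auto intro!: integrable_mult_right intij)
    finally show ?thesis by simp
  qed
  also have "\<dots> = (\<Sum>i\<in>I. \<Sum>j\<in>I. if i = j then (w i * cnj (w j)) * complex_of_real (Cl (fst i)) else 0)"
    using I(2) by (intro sum.cong refl) (auto simp: igf_cov[OF field] prod_eq_iff)
  also have "\<dots> = (\<Sum>i\<in>I. complex_of_real ((cmod (w i))^2 * Cl (fst i)))"
    using I(1) by (intro sum.cong refl) (simp add: complex_norm_square[symmetric])
  finally have e: "integral\<^sup>L M (\<lambda>\<omega>. Z \<omega> * cnj (Z \<omega>)) = complex_of_real (\<Sum>i\<in>I. (cmod (w i))^2 * Cl (fst i))"
    by simp
  have intN: "integrable M (\<lambda>\<omega>. (cmod (Z \<omega>))^2)"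
  proof (rule Bochner_Integration.integrable_bound[OF intZZ])
    show "(\<lambda>\<omega>. (cmod (Z \<omega>))^2) \<in> borel_measurable M" using measZ by measurable
    show "AE \<omega> in M. norm ((cmod (Z \<omega>))^2) \<le> norm (Z \<omega> * cnj (Z \<omega>))"
      by (simp add: norm_mult power2_eq_square)
  qed
  have "complex_of_real (integral\<^sup>L M (\<lambda>\<omega>. (cmod (Z \<omega>))^2)) = integral\<^sup>L M (\<lambda>\<omega>. complex_of_real ((cmod (Z \<omega>))^2))"
    by (rule integral_complex_of_real[symmetric])
  also have "\<dots> = integral\<^sup>L M (\<lambda>\<omega>. Z \<omega> * cnj (Z \<omega>))"
    by (simp only: complex_norm_square)
  finally have "complex_of_real (integral\<^sup>L M (\<lambda>\<omega>. (cmod (Z \<omega>))^2)) = integral\<^sup>L M (\<lambda>\<omega>. Z \<omega> * cnj (Z \<omega>))" .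
  then have "integral\<^sup>L M (\<lambda>\<omega>. (cmod (Z \<omega>))^2) = (\<Sum>i\<in>I. (cmod (w i))^2 * Cl (fst i))"
    unfolding e by (simp only: of_real_eq_iff)
  moreover have "(\<integral>\<^sup>+\<omega>. ennreal ((cmod (Z \<omega>))^2) \<partial>M) = ennreal (integral\<^sup>L M (\<lambda>\<omega>. (cmod (Z \<omega>))^2))"
    by (rule nn_integral_eq_integral[OF intN]) simp
  ultimately show ?thesis unfolding Z_def by simp
qed

lemma poly_meas [measurable]: "(\<lambda>x. poly p (x::real)) \<in> borel_measurable borel"
  by (intro borel_measurable_continuous_onI continuous_intros)

lemma legendreP_meas [measurable]: "(\<lambda>x. legendreP l m x) \<in> borel_measurable borel"
  unfolding legendreP_poly power_int_def by measurable

lemma sphY_meas [measurable]: "(\<lambda>y. sphY l m (fst y) (snd y)) \<in> borel_measurable (lborel \<Otimes>\<^sub>M lborel)"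
  unfolding sphY_def by measurable

lemma sf_lborel2: "sigma_finite_measure (lborel \<Otimes>\<^sub>M lborel :: (real \<times> real) measure)"
  by (intro sigma_finite_pair_measure lborel.sigma_finite_measure_axioms)

definition HX :: "('a \<Rightarrow> real \<Rightarrow> real \<Rightarrow> complex) \<Rightarrow> 'a \<times> real \<times> real \<Rightarrow> ennreal" where
  "HX X z = ennreal ((cmod (X (fst z) (fst (snd z)) (snd (snd z))))^2 * sin (fst (snd z)))
     * indicator {0..<2*pi} (snd (snd z)) * indicator {0..<pi} (fst (snd z))"

lemma HX_meas:
  assumes X: "(\<lambda>(\<omega>, \<theta>, \<phi>). X \<omega> \<theta> \<phi>) \<in> borel_measurable (M \<Otimes>\<^sub>M (lborel \<Otimes>\<^sub>M lborel))"
  shows "HX X \<in> borel_measurable (M \<Otimes>\<^sub>M (lborel \<Otimes>\<^sub>M lborel))"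
proof -
  define Xc where "Xc = (\<lambda>(\<omega>, \<theta>, \<phi>). X \<omega> \<theta> \<phi>)"
  have [measurable]: "Xc \<in> borel_measurable (M \<Otimes>\<^sub>M (lborel \<Otimes>\<^sub>M lborel))" using X by (simp add: Xc_def)
  have e: "HX X = (\<lambda>z. ennreal ((cmod (Xc z))^2 * sin (fst (snd z)))
     * indicator {0..<2*pi} (snd (snd z)) * indicator {0..<pi} (fst (snd z)))"
    by (auto simp: HX_def Xc_def fun_eq_iff split: prod.splits)
  show ?thesis unfolding e by measurable
qed

lemma L2sq_prod:
  assumes X: "(\<lambda>(\<omega>, \<theta>, \<phi>). X \<omega> \<theta> \<phi>) \<in> borel_measurable (M \<Otimes>\<^sub>M (lborel \<Otimes>\<^sub>M lborel))"
  shows "L2sq M X = (\<integral>\<^sup>+ z. HX X z \<partial>(M \<Otimes>\<^sub>M (lborel \<Otimes>\<^sub>M lborel)))"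
proof -
  interpret P: sigma_finite_measure "lborel \<Otimes>\<^sub>M lborel :: (real \<times> real) measure" by (rule sf_lborel2)
  have hm: "HX X \<in> borel_measurable (M \<Otimes>\<^sub>M (lborel \<Otimes>\<^sub>M lborel))" by (rule HX_meas[OF X])
  have inner: "(\<integral>\<^sup>+\<theta>\<in>{0..<pi}. (\<integral>\<^sup>+\<phi>\<in>{0..<2*pi}. ennreal ((cmod (X \<omega> \<theta> \<phi>))^2 * sin \<theta>) \<partial>lborel) \<partial>lborel)
      = (\<integral>\<^sup>+ y. HX X (\<omega>, y) \<partial>(lborel \<Otimes>\<^sub>M lborel))" if \<omega>: "\<omega> \<in> space M" for \<omega>
  proof -
    have m2: "(\<lambda>y. HX X (\<omega>, y)) \<in> borel_measurable (lborel \<Otimes>\<^sub>M lborel)"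
      by (rule measurable_compose_Pair1[OF \<omega> hm])
    have "(\<integral>\<^sup>+ y. HX X (\<omega>, y) \<partial>(lborel \<Otimes>\<^sub>M lborel)) = (\<integral>\<^sup>+\<theta>. \<integral>\<^sup>+\<phi>. HX X (\<omega>, \<theta>, \<phi>) \<partial>lborel \<partial>lborel)"
      using lborel.nn_integral_fst[OF m2] by simp
    also have "\<dots> = (\<integral>\<^sup>+\<theta>\<in>{0..<pi}. (\<integral>\<^sup>+\<phi>\<in>{0..<2*pi}. ennreal ((cmod (X \<omega> \<theta> \<phi>))^2 * sin \<theta>) \<partial>lborel) \<partial>lborel)"
    proof (rule nn_integral_cong)
      fix \<theta> :: real
      show "(\<integral>\<^sup>+\<phi>. HX X (\<omega>, \<theta>, \<phi>) \<partial>lborel) =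
        (\<integral>\<^sup>+\<phi>\<in>{0..<2*pi}. ennreal ((cmod (X \<omega> \<theta> \<phi>))^2 * sin \<theta>) \<partial>lborel) * indicator {0..<pi} \<theta>"
        by (cases "\<theta> \<in> {0..<pi}") (simp_all add: HX_def)
    qed
    finally show ?thesis by simp
  qed
  have "L2sq M X = (\<integral>\<^sup>+\<omega>. (\<integral>\<^sup>+ y. HX X (\<omega>, y) \<partial>(lborel \<Otimes>\<^sub>M lborel)) \<partial>M)"
    unfolding L2sq_def by (rule nn_integral_cong) (simp add: inner)
  also have "\<dots> = (\<integral>\<^sup>+ z. HX X z \<partial>(M \<Otimes>\<^sub>M (lborel \<Otimes>\<^sub>M lborel)))"
    by (rule sigma_finite_measure.nn_integral_fst[OF sf_lborel2 hm])
  finally show ?thesis .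
qed

lemma L2sq_swap:
  assumes M: "prob_space M"
    and X: "(\<lambda>(\<omega>, \<theta>, \<phi>). X \<omega> \<theta> \<phi>) \<in> borel_measurable (M \<Otimes>\<^sub>M (lborel \<Otimes>\<^sub>M lborel))"
  shows "L2sq M X = (\<integral>\<^sup>+ y. (\<integral>\<^sup>+ \<omega>. HX X (\<omega>, y) \<partial>M) \<partial>(lborel \<Otimes>\<^sub>M lborel))"
proof -
  interpret M: prob_space M by fact
  interpret P: sigma_finite_measure "lborel \<Otimes>\<^sub>M lborel :: (real \<times> real) measure" by (rule sf_lborel2)
  interpret MP: pair_sigma_finite M "lborel \<Otimes>\<^sub>M lborel :: (real \<times> real) measure"
    by (intro pair_sigma_finite.intro M.sigma_finite_measure_axioms sf_lborel2)
  show ?thesis unfolding L2sq_prod[OF X] by (rule MP.nn_integral_snd[OF HX_meas[OF X], symmetric])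
qed

lemma sph_norm_prod:
  assumes "\<bar>m\<bar> \<le> int l"
  shows "(\<integral>\<^sup>+ y. ennreal ((cmod (sphY l m (fst y) (snd y)))^2 * sin (fst y)) * indicator {0..<2*pi} (snd y)
      * indicator {0..<pi} (fst y) \<partial>(lborel \<Otimes>\<^sub>M lborel)) = 1"
proof -
  have m: "(\<lambda>y. ennreal ((cmod (sphY l m (fst y) (snd y)))^2 * sin (fst y)) * indicator {0..<2*pi} (snd y)
      * indicator {0..<pi} (fst y)) \<in> borel_measurable (lborel \<Otimes>\<^sub>M lborel)"
    by measurable
  have "(\<integral>\<^sup>+ y. ennreal ((cmod (sphY l m (fst y) (snd y)))^2 * sin (fst y)) * indicator {0..<2*pi} (snd y)
      * indicator {0..<pi} (fst y) \<partial>(lborel \<Otimes>\<^sub>M lborel)) =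
      (\<integral>\<^sup>+\<theta>. \<integral>\<^sup>+\<phi>. ennreal ((cmod (sphY l m \<theta> \<phi>))^2 * sin \<theta>) * indicator {0..<2*pi} \<phi>
      * indicator {0..<pi} \<theta> \<partial>lborel \<partial>lborel)"
    using lborel.nn_integral_fst[OF m] by simp
  also have "\<dots> = (\<integral>\<^sup>+\<theta>\<in>{0..<pi}. (\<integral>\<^sup>+\<phi>\<in>{0..<2*pi}. ennreal ((cmod (sphY l m \<theta> \<phi>))^2 * sin \<theta>) \<partial>lborel) \<partial>lborel)"
  proof (rule nn_integral_cong)
    fix \<theta> :: real
    show "(\<integral>\<^sup>+\<phi>. ennreal ((cmod (sphY l m \<theta> \<phi>))^2 * sin \<theta>) * indicator {0..<2*pi} \<phi> * indicator {0..<pi} \<theta> \<partial>lborel) =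
      (\<integral>\<^sup>+\<phi>\<in>{0..<2*pi}. ennreal ((cmod (sphY l m \<theta> \<phi>))^2 * sin \<theta>) \<partial>lborel) * indicator {0..<pi} \<theta>"
      by (cases "\<theta> \<in> {0..<pi}") simp_all
  qed
  also have "\<dots> = 1" by (rule sph_norm[OF assms])
  finally show ?thesis .
qed

lemma Z_meas:
  assumes field: "iso_gauss_field M a Cl" and I: "\<forall>i\<in>I. \<bar>snd i\<bar> \<le> int (fst i)"
  shows "(\<lambda>(\<omega>, \<theta>, \<phi>). \<Sum>i\<in>I. w i * sphY (fst i) (snd i) \<theta> \<phi> * a (fst i) (snd i) \<omega>)
     \<in> borel_measurable (M \<Otimes>\<^sub>M (lborel \<Otimes>\<^sub>M lborel))"
proof -
  have e: "(\<lambda>(\<omega>, \<theta>, \<phi>). \<Sum>i\<in>I. w i * sphY (fst i) (snd i) \<theta> \<phi> * a (fst i) (snd i) \<omega>) =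
     (\<lambda>z. \<Sum>i\<in>I. w i * sphY (fst i) (snd i) (fst (snd z)) (snd (snd z)) * a (fst i) (snd i) (fst z))"
    by (auto simp: fun_eq_iff split: prod.splits)
  have am: "a (fst i) (snd i) \<in> borel_measurable M" if "i \<in> I" for i
    using igf_meas[OF field] I that by auto
  have ym: "(\<lambda>z. sphY (fst i) (snd i) (fst (snd z)) (snd (snd z))) \<in> borel_measurable (M \<Otimes>\<^sub>M (lborel \<Otimes>\<^sub>M lborel))" for i
    using measurable_compose[OF measurable_snd sphY_meas[of "fst i" "snd i"]] by simp
  show ?thesis unfolding e
    by (intro borel_measurable_sum borel_measurable_times borel_measurable_const ym
        measurable_compose[OF measurable_fst am])
qed

lemma L2sq_sum:
  assumes field: "iso_gauss_field M a Cl" and I: "finite I" "\<forall>i\<in>I. \<bar>snd i\<bar> \<le> int (fst i)"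
  shows "L2sq M (\<lambda>\<omega> \<theta> \<phi>. \<Sum>i\<in>I. w i * sphY (fst i) (snd i) \<theta> \<phi> * a (fst i) (snd i) \<omega>)
       = ennreal (\<Sum>i\<in>I. (cmod (w i))^2 * Cl (fst i))"
proof -
  define X where "X = (\<lambda>\<omega> \<theta> \<phi>. \<Sum>i\<in>I. w i * sphY (fst i) (snd i) \<theta> \<phi> * a (fst i) (snd i) \<omega>)"
  have Xm: "(\<lambda>(\<omega>, \<theta>, \<phi>). X \<omega> \<theta> \<phi>) \<in> borel_measurable (M \<Otimes>\<^sub>M (lborel \<Otimes>\<^sub>M lborel))"
    unfolding X_def by (rule Z_meas[OF field I(2)])
  have Cnn: "\<And>l. Cl l \<ge> 0" by (rule Cl_nonneg[OF field])
  define F where "F i y = ennreal ((cmod (sphY (fst i) (snd i) (fst y) (snd y)))^2 * sin (fst y)) * indicator {0..<2*pi} (snd y)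
      * indicator {0..<pi} (fst y)" for i y
  have inner: "(\<integral>\<^sup>+ \<omega>. HX X (\<omega>, y) \<partial>M) = (\<Sum>i\<in>I. ennreal ((cmod (w i))^2 * Cl (fst i)) * F i y)" for y
  proof (cases "fst y \<in> {0..<pi} \<and> snd y \<in> {0..<2*pi}")
    case False
    then have "HX X (\<omega>, y) = 0" for \<omega> by (auto simp: HX_def)
    moreover have "F i y = 0" for i using False by (auto simp: F_def)
    ultimately show ?thesis by simp
  next
    case True
    then have s: "sin (fst y) \<ge> 0" by (auto intro!: sin_ge_zero)
    define v where "v i = w i * sphY (fst i) (snd i) (fst y) (snd y)" for i
    have Xv: "X \<omega> (fst y) (snd y) = (\<Sum>i\<in>I. v i * a (fst i) (snd i) \<omega>)" for \<omega>
      unfolding X_def v_def by simp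
    have "HX X (\<omega>, y) = ennreal ((cmod (\<Sum>i\<in>I. v i * a (fst i) (snd i) \<omega>))^2) * ennreal (sin (fst y))" for \<omega>
      using True s by (simp add: HX_def Xv ennreal_mult)
    then have "(\<integral>\<^sup>+ \<omega>. HX X (\<omega>, y) \<partial>M) = (\<integral>\<^sup>+ \<omega>. ennreal ((cmod (\<Sum>i\<in>I. v i * a (fst i) (snd i) \<omega>))^2) \<partial>M) * ennreal (sin (fst y))"
    proof (simp only:, intro nn_integral_multc)
      have "(\<lambda>\<omega>. \<Sum>i\<in>I. v i * a (fst i) (snd i) \<omega>) \<in> borel_measurable M"
        using igf_meas[OF field] I(2) by (intro borel_measurable_sum borel_measurable_times borel_measurable_const) auto
      then show "(\<lambda>\<omega>. ennreal ((cmod (\<Sum>i\<in>I. v i * a (fst i) (snd i) \<omega>))^2)) \<in> borel_measurable M"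
        by measurable
    qed
    also have "\<dots> = ennreal (\<Sum>i\<in>I. (cmod (v i))^2 * Cl (fst i)) * ennreal (sin (fst y))"
      by (simp only: expect_sq[OF field I])
    also have "\<dots> = ennreal (\<Sum>i\<in>I. ((cmod (w i))^2 * Cl (fst i)) * ((cmod (sphY (fst i) (snd i) (fst y) (snd y)))^2 * sin (fst y)))"
      using s Cnn by (simp add: ennreal_mult[symmetric] sum_nonneg sum_distrib_left sum_distrib_right v_def norm_mult power_mult_distrib mult_ac)
    also have "\<dots> = (\<Sum>i\<in>I. ennreal ((cmod (w i))^2 * Cl (fst i)) * F i y)"
      using s Cnn True by (simp add: F_def ennreal_mult sum_ennreal[symmetric])
    finally show ?thesis .
  qed
  have Fm: "F i \<in> borel_measurable (lborel \<Otimes>\<^sub>M lborel)" for i unfolding F_def by measurable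
  have "L2sq M X = (\<integral>\<^sup>+ y. (\<Sum>i\<in>I. ennreal ((cmod (w i))^2 * Cl (fst i)) * F i y) \<partial>(lborel \<Otimes>\<^sub>M lborel))"
    unfolding L2sq_swap[OF igf_prob[OF field] Xm] inner ..
  also have "\<dots> = (\<Sum>i\<in>I. ennreal ((cmod (w i))^2 * Cl (fst i)) * (\<integral>\<^sup>+ y. F i y \<partial>(lborel \<Otimes>\<^sub>M lborel)))"
    using Fm by (simp add: nn_integral_sum nn_integral_cmult)
  also have "\<dots> = (\<Sum>i\<in>I. ennreal ((cmod (w i))^2 * Cl (fst i)))"
    using I(2) by (intro sum.cong refl) (simp add: F_def sph_norm_prod)
  also have "\<dots> = ennreal (\<Sum>i\<in>I. (cmod (w i))^2 * Cl (fst i))"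
    using Cnn by (simp add: sum_ennreal)
  finally show ?thesis unfolding X_def .
qed

lemma A_bound_pos:
  fixes K \<alpha> t :: real
  assumes K: "0 < K" "K \<le> \<alpha>" and t: "0 \<le> t"
  shows "exp (- \<alpha> * t) * (cosh (t * K) + \<alpha> * (sinh (t * K) / K)) \<le> 1"
proof -
  define \<beta> where "\<beta> = \<alpha> / K"
  have bK: "\<beta> * K = \<alpha>" using K by (simp add: \<beta>_def)
  define h where "h x = exp (- \<alpha> * x) * (cosh (x * K) + \<beta> * sinh (x * K))" for x
  have "h t \<le> h 0"
  proof (rule DERIV_nonpos_imp_nonincreasing[OF t])
    fix x assume x: "0 \<le> x" "x \<le> t"
    have d0: "DERIV h x :> exp (- \<alpha> * x) * (- \<alpha>) * (cosh (x * K) + \<beta> * sinh (x * K))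
        + exp (- \<alpha> * x) * (sinh (x * K) * K + \<beta> * (cosh (x * K) * K))"
      unfolding h_def by (auto intro!: derivative_eq_intros)
    have "exp (- \<alpha> * x) * (- \<alpha>) * (cosh (x * K) + \<beta> * sinh (x * K))
        + exp (- \<alpha> * x) * (sinh (x * K) * K + \<beta> * (cosh (x * K) * K))
        = exp (- \<alpha> * x) * sinh (x * K) * (K - \<alpha>^2 / K)"
      unfolding bK[symmetric] using K by (simp add: field_simps power2_eq_square)
    with d0 have d: "DERIV h x :> exp (- \<alpha> * x) * sinh (x * K) * (K - \<alpha>^2 / K)" by simp
    have "sinh (x * K) \<ge> 0" using real_le_x_sinh[of "x * K"] x K by simp
    moreover have "K - \<alpha>^2 / K \<le> 0"
    proof -
      have "K * K \<le> \<alpha> * \<alpha>" using K by (intro mult_mono) auto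
      then show ?thesis using K by (simp add: field_simps power2_eq_square)
    qed
    ultimately have "exp (- \<alpha> * x) * sinh (x * K) * (K - \<alpha>^2 / K) \<le> 0"
      by (simp add: mult_nonneg_nonpos)
    then show "\<exists>y. DERIV h x :> y \<and> y \<le> 0" using d by blast
  qed
  then show ?thesis by (simp add: h_def \<beta>_def)
qed

lemma A_bound:
  fixes K \<alpha> t :: real
  assumes K: "0 \<le> K" "K \<le> \<alpha>" and t: "0 \<le> t"
  shows "0 \<le> cosh (t * K) + \<alpha> * (if K = 0 then t else sinh (t * K) / K)"
    and "exp (- \<alpha> * t) * (cosh (t * K) + \<alpha> * (if K = 0 then t else sinh (t * K) / K)) \<le> 1"
proof -
  show "0 \<le> cosh (t * K) + \<alpha> * (if K = 0 then t else sinh (t * K) / K)"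
  proof -
    have "0 \<le> (if K = 0 then t else sinh (t * K) / K)"
      using real_le_x_sinh[of "t * K"] K t by auto
    moreover have "0 \<le> \<alpha>" using K by simp
    ultimately show ?thesis using cosh_real_pos[of "t * K"] by (simp add: add_nonneg_nonneg less_imp_le)
  qed
  show "exp (- \<alpha> * t) * (cosh (t * K) + \<alpha> * (if K = 0 then t else sinh (t * K) / K)) \<le> 1"
  proof (cases "K = 0")
    case True
    have "1 + \<alpha> * t \<le> exp (\<alpha> * t)" by (rule exp_ge_add_one_self)
    then have "exp (- \<alpha> * t) * (1 + \<alpha> * t) \<le> exp (- \<alpha> * t) * exp (\<alpha> * t)"
      by (intro mult_left_mono) auto
    also have "\<dots> = 1" by (simp add: exp_add[symmetric])
    finally show ?thesis using True by simp
  next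
    case False
    then show ?thesis using A_bound_pos[of K \<alpha> t] K t by simp
  qed
qed

lemma B_bound:
  fixes K \<beta> t :: real
  assumes "0 \<le> \<beta>"
  shows "\<bar>cos (t * K) + \<beta> * sin (t * K)\<bar> \<le> 1 + \<beta>"
proof -
  have "\<bar>cos (t * K) + \<beta> * sin (t * K)\<bar> \<le> \<bar>cos (t * K)\<bar> + \<beta> * \<bar>sin (t * K)\<bar>"
    using assms by (simp add: abs_triangle_ineq[THEN order_trans] abs_mult)
  also have "\<dots> \<le> 1 + \<beta> * 1" using assms by (intro add_mono mult_left_mono) auto
  finally show ?thesis by simp
qed

lemma lstar_iff:
  fixes c D k :: real
  assumes "c > 0" "D > 0" "k > 0" "x \<ge> 0"
  shows "x \<le> lstar c D k \<longleftrightarrow> c^2 * x * (x + 1) * k^2 \<le> c^4 / (4 * D^2)"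
proof -
  define s where "s = sqrt (D^2 * k^2 + c^2)"
  have Dk: "D * k > 0" using assms by simp
  have "x \<le> lstar c D k \<longleftrightarrow> x * (2 * D * k) \<le> s - D * k"
    unfolding lstar_def s_def using Dk by (simp add: pos_le_divide_eq mult.commute mult.left_commute)
  also have "\<dots> \<longleftrightarrow> D * k * (2 * x + 1) \<le> s" by (simp add: algebra_simps)
  also have "\<dots> \<longleftrightarrow> (D * k * (2 * x + 1))^2 \<le> D^2 * k^2 + c^2"
  proof -
    have nn: "0 \<le> D * k * (2 * x + 1)" using Dk assms by simp
    have "D * k * (2 * x + 1) = sqrt ((D * k * (2 * x + 1))^2)" using nn by simp
    then have "D * k * (2 * x + 1) \<le> s \<longleftrightarrow> sqrt ((D * k * (2 * x + 1))^2) \<le> sqrt (D^2 * k^2 + c^2)"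
      unfolding s_def by simp
    also have "\<dots> \<longleftrightarrow> (D * k * (2 * x + 1))^2 \<le> D^2 * k^2 + c^2" by (rule real_sqrt_le_iff)
    finally show ?thesis .
  qed
  also have "\<dots> \<longleftrightarrow> 4 * D^2 * k^2 * (x * (x + 1)) \<le> c^2"
    by (simp add: power2_eq_square algebra_simps)
  also have "\<dots> \<longleftrightarrow> c^2 * (4 * D^2 * k^2 * (x * (x + 1))) \<le> c^2 * c^2"
    by (rule mult_le_cancel_left_pos[symmetric]) (use assms in simp)
  also have "\<dots> \<longleftrightarrow> c^2 * x * (x + 1) * k^2 \<le> c^4 / (4 * D^2)"
    using assms by (simp add: pos_le_divide_eq power2_eq_square power4_eq_xxxx mult_ac)
  finally show ?thesis .
qed

lemma sphY_l0: "sphY l 0 0 0 = complex_of_real (sqrt ((2 * real l + 1) / (4 * pi)))"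
  unfolding sphY_def dlm_def by (simp add: legendreP_l0_1)

lemma xi_eq: "xi c D k a l m t \<omega> = a l m \<omega> * complex_of_real (Al c D k l t + Bl c D k l t)"
proof -
  have "sqrt (4 * pi / (2 * real l + 1)) * sqrt ((2 * real l + 1) / (4 * pi)) = 1"
    by (simp add: real_sqrt_mult[symmetric])
  then have "complex_of_real (sqrt (4 * pi / (2 * real l + 1))) * cnj (sphY l 0 0 0) = 1"
    unfolding sphY_l0 by (simp only: complex_cnj_complex_of_real of_real_mult[symmetric]) simp
  then show ?thesis unfolding xi_def
    by (metis (no_types, lifting) mult.commute mult.left_commute mult_1)
qed

definition wc :: "real \<Rightarrow> real \<Rightarrow> real \<Rightarrow> real \<Rightarrow> nat \<Rightarrow> complex" where
  "wc c D k t l = complex_of_real (exp (- (c^2 * t) / (2 * D)) * (Al c D k l t + Bl c D k l t))"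

lemma cmod_wc: "(cmod (wc c D k t l))^2 = (exp (- (c^2 * t) / (2 * D)) * (Al c D k l t + Bl c D k l t))^2"
  by (simp only: wc_def norm_of_real power2_abs)

lemma usum_eq:
  "usum c D k a N \<omega> \<theta> \<phi> t = (\<Sum>i\<in>Sigma {..<N} (\<lambda>l. {- int l..int l}).
      wc c D k t (fst i) * sphY (fst i) (snd i) \<theta> \<phi> * a (fst i) (snd i) \<omega>)"
proof -
  have "usum c D k a N \<omega> \<theta> \<phi> t = (\<Sum>l<N. \<Sum>m\<in>{- int l..int l}. wc c D k t l * sphY l m \<theta> \<phi> * a l m \<omega>)"
    unfolding usum_def xi_eq wc_def sum_distrib_left by (intro sum.cong refl) (simp add: mult_ac)
  also have "\<dots> = (\<Sum>i\<in>Sigma {..<N} (\<lambda>l. {- int l..int l}). wc c D k t (fst i) * sphY (fst i) (snd i) \<theta> \<phi> * a (fst i) (snd i) \<omega>)"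
    by (subst sum.Sigma) (auto simp: split_beta)
  finally show ?thesis .
qed

lemma usum_diff:
  assumes "L \<le> N"
  shows "usum c D k a N \<omega> \<theta> \<phi> t - usum c D k a L \<omega> \<theta> \<phi> t = (\<Sum>i\<in>Sigma {L..<N} (\<lambda>l. {- int l..int l}).
      wc c D k t (fst i) * sphY (fst i) (snd i) \<theta> \<phi> * a (fst i) (snd i) \<omega>)"
proof -
  define F where "F l = (\<Sum>m\<in>{- int l..int l}. sphY l m \<theta> \<phi> * xi c D k a l m t \<omega>)" for l
  have "{..<N} = {..<L} \<union> {L..<N}" using assms by auto
  then have "(\<Sum>l<N. F l) = sum F ({..<L} \<union> {L..<N})" by simp
  also have "\<dots> = (\<Sum>l<L. F l) + (\<Sum>l\<in>{L..<N}. F l)"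
    by (rule sum.union_disjoint) auto
  finally have "(\<Sum>l<N. F l) = (\<Sum>l<L. F l) + (\<Sum>l\<in>{L..<N}. F l)" .
  then have "usum c D k a N \<omega> \<theta> \<phi> t - usum c D k a L \<omega> \<theta> \<phi> t =
      complex_of_real (exp (- (c^2 * t) / (2 * D))) * (\<Sum>l\<in>{L..<N}. F l)"
    unfolding usum_def F_def by (simp add: algebra_simps)
  also have "\<dots> = (\<Sum>l\<in>{L..<N}. \<Sum>m\<in>{- int l..int l}. wc c D k t l * sphY l m \<theta> \<phi> * a l m \<omega>)"
    unfolding F_def xi_eq wc_def sum_distrib_left by (intro sum.cong refl) (simp add: mult_ac)
  also have "\<dots> = (\<Sum>i\<in>Sigma {L..<N} (\<lambda>l. {- int l..int l}). wc c D k t (fst i) * sphY (fst i) (snd i) \<theta> \<phi> * a (fst i) (snd i) \<omega>)"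
    by (subst sum.Sigma) (auto simp: split_beta)
  finally show ?thesis .
qed

lemma usum_meas:
  assumes field: "iso_gauss_field M a Cl"
  shows "(\<lambda>(\<omega>, \<theta>, \<phi>). usum c D k a N \<omega> \<theta> \<phi> t) \<in> borel_measurable (M \<Otimes>\<^sub>M (lborel \<Otimes>\<^sub>M lborel))"
  unfolding usum_eq by (rule Z_meas[OF field]) auto

lemma sum_Sigma_const:
  "(\<Sum>i\<in>Sigma A (\<lambda>l. {- int l..int l}). f (fst i)) = (\<Sum>l\<in>A. (2 * real l + 1) * f l)"
  if "finite A" for f :: "nat \<Rightarrow> real"
proof -
  have "(\<Sum>i\<in>Sigma A (\<lambda>l. {- int l..int l}). f (fst i)) = (\<Sum>l\<in>A. \<Sum>m\<in>{- int l..int l}. f l)"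
    using that by (subst sum.Sigma) (auto simp: split_beta)
  also have "\<dots> = (\<Sum>l\<in>A. (2 * real l + 1) * f l)"
  proof (intro sum.cong refl)
    fix l
    have "card {- int l..int l} = 2 * l + 1" by simp
    then show "(\<Sum>m\<in>{- int l..int l}. f l) = (2 * real l + 1) * f l" by simp
  qed
  finally show ?thesis .
qed

lemma diff_L2:
  assumes field: "iso_gauss_field M a Cl" and LN: "L \<le> N"
    and K: "\<And>l. L \<le> l \<Longrightarrow> \<bar>exp (- (c^2 * t) / (2 * D)) * (Al c D k l t + Bl c D k l t)\<bar> \<le> K"
  shows "L2sq M (\<lambda>\<omega> \<theta> \<phi>. usum c D k a N \<omega> \<theta> \<phi> t - usum c D k a L \<omega> \<theta> \<phi> t)
      \<le> ennreal (K^2 * (\<Sum>l. (2 * real (l + L) + 1) * Cl (l + L)))"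
proof -
  define ev where "ev l = exp (- (c^2 * t) / (2 * D)) * (Al c D k l t + Bl c D k l t)" for l
  have Cnn: "\<And>l. Cl l \<ge> 0" by (rule Cl_nonneg[OF field])
  have "L2sq M (\<lambda>\<omega> \<theta> \<phi>. usum c D k a N \<omega> \<theta> \<phi> t - usum c D k a L \<omega> \<theta> \<phi> t)
     = L2sq M (\<lambda>\<omega> \<theta> \<phi>. \<Sum>i\<in>Sigma {L..<N} (\<lambda>l. {- int l..int l}).
      wc c D k t (fst i) * sphY (fst i) (snd i) \<theta> \<phi> * a (fst i) (snd i) \<omega>)"
    unfolding usum_diff[OF LN] ..
  also have "\<dots> = ennreal (\<Sum>i\<in>Sigma {L..<N} (\<lambda>l. {- int l..int l}). (cmod (wc c D k t (fst i)))^2 * Cl (fst i))"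
    by (rule L2sq_sum[OF field]) auto
  finally have e1: "L2sq M (\<lambda>\<omega> \<theta> \<phi>. usum c D k a N \<omega> \<theta> \<phi> t - usum c D k a L \<omega> \<theta> \<phi> t)
     = ennreal (\<Sum>i\<in>Sigma {L..<N} (\<lambda>l. {- int l..int l}). (cmod (wc c D k t (fst i)))^2 * Cl (fst i))" .
  have "(\<Sum>i\<in>Sigma {L..<N} (\<lambda>l. {- int l..int l}). (cmod (wc c D k t (fst i)))^2 * Cl (fst i))
      = (\<Sum>l\<in>{L..<N}. (2 * real l + 1) * ((ev l)^2 * Cl l))"
    by (subst sum_Sigma_const[where f="\<lambda>l. (cmod (wc c D k t l))^2 * Cl l"]) (auto simp: cmod_wc ev_def)
  also have "\<dots> \<le> (\<Sum>l\<in>{L..<N}. K^2 * ((2 * real l + 1) * Cl l))"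
  proof (rule sum_mono)
    fix l assume "l \<in> {L..<N}"
    then have "\<bar>ev l\<bar> \<le> K" using K by (simp add: ev_def)
    then have "(ev l)^2 \<le> K^2" by (metis abs_ge_zero order_trans power2_abs power_mono)
    then have "(ev l)^2 * ((2 * real l + 1) * Cl l) \<le> K^2 * ((2 * real l + 1) * Cl l)"
      using Cnn[of l] by (intro mult_right_mono) auto
    then show "(2 * real l + 1) * ((ev l)^2 * Cl l) \<le> K^2 * ((2 * real l + 1) * Cl l)"
      by (simp only: mult_ac)
  qed
  also have "\<dots> = K^2 * (\<Sum>l\<in>{L..<N}. (2 * real l + 1) * Cl l)" by (simp add: sum_distrib_left)
  also have "\<dots> \<le> K^2 * (\<Sum>l. (2 * real (l + L) + 1) * Cl (l + L))"
  proof (rule mult_left_mono)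
    have "(\<Sum>l\<in>{L..<N}. (2 * real l + 1) * Cl l) = (\<Sum>j\<in>{0..<N - L}. (2 * real (j + L) + 1) * Cl (j + L))"
      using sum.shift_bounds_nat_ivl[of "\<lambda>l. (2 * real l + 1) * Cl l" 0 L "N - L"] LN by simp
    also have "\<dots> \<le> (\<Sum>l. (2 * real (l + L) + 1) * Cl (l + L))"
    proof -
      have sm: "summable (\<lambda>j. (\<lambda>l. (2 * real l + 1) * Cl l) (j + L))"
        using igf_summable[OF field] by (rule iffD2[OF summable_iff_shift[of "\<lambda>l. (2 * real l + 1) * Cl l" L]])
      show ?thesis using sum_le_suminf[OF sm, of "{0..<N - L}"] Cnn by simp
    qed
    finally show "(\<Sum>l\<in>{L..<N}. (2 * real l + 1) * Cl l) \<le> (\<Sum>l. (2 * real (l + L) + 1) * Cl (l + L))" .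
  qed simp
  finally have "(\<Sum>i\<in>Sigma {L..<N} (\<lambda>l. {- int l..int l}). (cmod (wc c D k t (fst i)))^2 * Cl (fst i))
      \<le> K^2 * (\<Sum>l. (2 * real (l + L) + 1) * Cl (l + L))" .
  then show ?thesis unfolding e1 by (rule ennreal_leI)
qed

lemma L2sq_tri:
  assumes Xm: "(\<lambda>(\<omega>, \<theta>, \<phi>). X \<omega> \<theta> \<phi>) \<in> borel_measurable (M \<Otimes>\<^sub>M (lborel \<Otimes>\<^sub>M lborel))"
    and Ym: "(\<lambda>(\<omega>, \<theta>, \<phi>). Y \<omega> \<theta> \<phi>) \<in> borel_measurable (M \<Otimes>\<^sub>M (lborel \<Otimes>\<^sub>M lborel))"
    and Zm: "(\<lambda>(\<omega>, \<theta>, \<phi>). Z \<omega> \<theta> \<phi>) \<in> borel_measurable (M \<Otimes>\<^sub>M (lborel \<Otimes>\<^sub>M lborel))"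
  shows "L2sq M (\<lambda>\<omega> \<theta> \<phi>. X \<omega> \<theta> \<phi> - Z \<omega> \<theta> \<phi>)
    \<le> 2 * L2sq M (\<lambda>\<omega> \<theta> \<phi>. X \<omega> \<theta> \<phi> - Y \<omega> \<theta> \<phi>) + 2 * L2sq M (\<lambda>\<omega> \<theta> \<phi>. Y \<omega> \<theta> \<phi> - Z \<omega> \<theta> \<phi>)"
proof -
  have dm: "(\<lambda>(\<omega>, \<theta>, \<phi>). A \<omega> \<theta> \<phi> - B \<omega> \<theta> \<phi>) \<in> borel_measurable (M \<Otimes>\<^sub>M (lborel \<Otimes>\<^sub>M lborel))"
    if "(\<lambda>(\<omega>, \<theta>, \<phi>). A \<omega> \<theta> \<phi>) \<in> borel_measurable (M \<Otimes>\<^sub>M (lborel \<Otimes>\<^sub>M lborel))"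
       "(\<lambda>(\<omega>, \<theta>, \<phi>). B \<omega> \<theta> \<phi>) \<in> borel_measurable (M \<Otimes>\<^sub>M (lborel \<Otimes>\<^sub>M lborel))"
    for A B :: "_ \<Rightarrow> real \<Rightarrow> real \<Rightarrow> complex"
  proof -
    have "(\<lambda>(\<omega>, \<theta>, \<phi>). A \<omega> \<theta> \<phi> - B \<omega> \<theta> \<phi>) = (\<lambda>z. (\<lambda>(\<omega>, \<theta>, \<phi>). A \<omega> \<theta> \<phi>) z - (\<lambda>(\<omega>, \<theta>, \<phi>). B \<omega> \<theta> \<phi>) z)"
      by (auto simp: fun_eq_iff split: prod.splits)
    then show ?thesis using that by (simp only:) (rule borel_measurable_diff)
  qed
  have m1: "HX (\<lambda>\<omega> \<theta> \<phi>. X \<omega> \<theta> \<phi> - Y \<omega> \<theta> \<phi>) \<in> borel_measurable (M \<Otimes>\<^sub>M (lborel \<Otimes>\<^sub>M lborel))"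
    by (rule HX_meas[OF dm[OF Xm Ym]])
  have m2: "HX (\<lambda>\<omega> \<theta> \<phi>. Y \<omega> \<theta> \<phi> - Z \<omega> \<theta> \<phi>) \<in> borel_measurable (M \<Otimes>\<^sub>M (lborel \<Otimes>\<^sub>M lborel))"
    by (rule HX_meas[OF dm[OF Ym Zm]])
  have pw: "HX (\<lambda>\<omega> \<theta> \<phi>. X \<omega> \<theta> \<phi> - Z \<omega> \<theta> \<phi>) z \<le>
      2 * HX (\<lambda>\<omega> \<theta> \<phi>. X \<omega> \<theta> \<phi> - Y \<omega> \<theta> \<phi>) z + 2 * HX (\<lambda>\<omega> \<theta> \<phi>. Y \<omega> \<theta> \<phi> - Z \<omega> \<theta> \<phi>) z" for z
  proof (cases "fst (snd z) \<in> {0..<pi} \<and> snd (snd z) \<in> {0..<2*pi}")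
    case False then show ?thesis by (auto simp: HX_def)
  next
    case True
    define p where "p = X (fst z) (fst (snd z)) (snd (snd z)) - Y (fst z) (fst (snd z)) (snd (snd z))"
    define q where "q = Y (fst z) (fst (snd z)) (snd (snd z)) - Z (fst z) (fst (snd z)) (snd (snd z))"
    define s where "s = sin (fst (snd z))"
    have s: "s \<ge> 0" using True by (auto simp: s_def intro!: sin_ge_zero)
    have "(cmod (p + q))^2 \<le> 2 * (cmod p)^2 + 2 * (cmod q)^2"
    proof -
      have "cmod (p + q) \<le> cmod p + cmod q" by (rule norm_triangle_ineq)
      then have "(cmod (p + q))^2 \<le> (cmod p + cmod q)^2" by (simp add: power_mono)
      also have "\<dots> \<le> 2 * (cmod p)^2 + 2 * (cmod q)^2"
        using sum_squares_bound[of "cmod p" "cmod q"] by (simp add: power2_eq_square algebra_simps)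
      finally show ?thesis .
    qed
    then have "(cmod (p + q))^2 * s \<le> (2 * (cmod p)^2 + 2 * (cmod q)^2) * s"
      by (rule mult_right_mono[OF _ s])
    also have "\<dots> = 2 * ((cmod p)^2 * s) + 2 * ((cmod q)^2 * s)" by (simp only: distrib_right mult.assoc)
    finally have r: "(cmod (p + q))^2 * s \<le> 2 * ((cmod p)^2 * s) + 2 * ((cmod q)^2 * s)" .
    have n1: "0 \<le> (cmod p)^2 * s" "0 \<le> (cmod q)^2 * s" using s by auto
    have "ennreal ((cmod (p + q))^2 * s) \<le> ennreal (2 * ((cmod p)^2 * s) + 2 * ((cmod q)^2 * s))"
      by (rule ennreal_leI[OF r])
    also have "\<dots> = ennreal (2 * ((cmod p)^2 * s)) + ennreal (2 * ((cmod q)^2 * s))"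
      using n1 by (intro ennreal_plus) auto
    also have "\<dots> = 2 * ennreal ((cmod p)^2 * s) + 2 * ennreal ((cmod q)^2 * s)"
      by (simp only: ennreal_mult'[of 2] ennreal_numeral)
    finally have "ennreal ((cmod (p + q))^2 * s) \<le> 2 * ennreal ((cmod p)^2 * s) + 2 * ennreal ((cmod q)^2 * s)" .
    moreover have "X (fst z) (fst (snd z)) (snd (snd z)) - Z (fst z) (fst (snd z)) (snd (snd z)) = p + q"
      by (simp add: p_def q_def)
    moreover have "X (fst z) (fst (snd z)) (snd (snd z)) - Y (fst z) (fst (snd z)) (snd (snd z)) = p"
      "Y (fst z) (fst (snd z)) (snd (snd z)) - Z (fst z) (fst (snd z)) (snd (snd z)) = q"
      by (simp_all add: p_def q_def)
    ultimately show ?thesis using True by (simp add: HX_def s_def)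
  qed
  have "L2sq M (\<lambda>\<omega> \<theta> \<phi>. X \<omega> \<theta> \<phi> - Z \<omega> \<theta> \<phi>) = (\<integral>\<^sup>+ z. HX (\<lambda>\<omega> \<theta> \<phi>. X \<omega> \<theta> \<phi> - Z \<omega> \<theta> \<phi>) z \<partial>(M \<Otimes>\<^sub>M (lborel \<Otimes>\<^sub>M lborel)))"
    by (rule L2sq_prod[OF dm[OF Xm Zm]])
  also have "\<dots> \<le> (\<integral>\<^sup>+ z. 2 * HX (\<lambda>\<omega> \<theta> \<phi>. X \<omega> \<theta> \<phi> - Y \<omega> \<theta> \<phi>) z + 2 * HX (\<lambda>\<omega> \<theta> \<phi>. Y \<omega> \<theta> \<phi> - Z \<omega> \<theta> \<phi>) z \<partial>(M \<Otimes>\<^sub>M (lborel \<Otimes>\<^sub>M lborel)))"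
    by (rule nn_integral_mono) (rule pw)
  also have "\<dots> = 2 * (\<integral>\<^sup>+ z. HX (\<lambda>\<omega> \<theta> \<phi>. X \<omega> \<theta> \<phi> - Y \<omega> \<theta> \<phi>) z \<partial>(M \<Otimes>\<^sub>M (lborel \<Otimes>\<^sub>M lborel)))
      + 2 * (\<integral>\<^sup>+ z. HX (\<lambda>\<omega> \<theta> \<phi>. Y \<omega> \<theta> \<phi> - Z \<omega> \<theta> \<phi>) z \<partial>(M \<Otimes>\<^sub>M (lborel \<Otimes>\<^sub>M lborel)))"
    using m1 m2 by (simp add: nn_integral_add nn_integral_cmult)
  also have "\<dots> = 2 * L2sq M (\<lambda>\<omega> \<theta> \<phi>. X \<omega> \<theta> \<phi> - Y \<omega> \<theta> \<phi>) + 2 * L2sq M (\<lambda>\<omega> \<theta> \<phi>. Y \<omega> \<theta> \<phi> - Z \<omega> \<theta> \<phi>)"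
    by (simp add: L2sq_prod[OF dm[OF Xm Ym]] L2sq_prod[OF dm[OF Ym Zm]])
  finally show ?thesis .
qed

lemma Kl_bounds:
  assumes "c > 0" "D > 0" "k > 0" "real l \<le> lstar c D k"
  shows "0 \<le> Kl c D k l" "Kl c D k l \<le> c^2 / (2 * D)"
proof -
  have le: "c^2 * real l * (real l + 1) * k^2 \<le> c^4 / (4 * D^2)"
    using lstar_iff[OF assms(1,2,3) of_nat_0_le_iff[of l]] assms(4) by blast
  show "0 \<le> Kl c D k l" unfolding Kl_def using le by simp
  have nn: "0 \<le> c^2 * real l * (real l + 1) * k^2" by simp
  have k1: "Kl c D k l \<le> sqrt (c^4 / (4 * D^2))" unfolding Kl_def
    using nn by (intro real_sqrt_le_mono) simp
  have k2: "c^4 / (4 * D^2) = (c^2 / (2 * D))^2" by (simp add: power_divide power_mult_distrib flip: power_mult)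
  have k3: "sqrt ((c^2 / (2 * D))^2) = c^2 / (2 * D)" using assms by simp
  show "Kl c D k l \<le> c^2 / (2 * D)" using k1 unfolding k2 k3 .
qed

lemma Kl'_pos:
  assumes "c > 0" "D > 0" "k > 0" "lstar c D k < real l"
  shows "Kl' c D k l > 0"
proof -
  have "\<not> c^2 * real l * (real l + 1) * k^2 \<le> c^4 / (4 * D^2)"
    using lstar_iff[OF assms(1,2,3) of_nat_0_le_iff[of l]] assms(4) by auto
  then show ?thesis unfolding Kl'_def by simp
qed

lemma Kl'_mono:
  assumes "l0 \<le> l"
  shows "Kl' c D k l0 \<le> Kl' c D k l"
proof -
  have "real l0 * (real l0 + 1) \<le> real l * (real l + 1)" using assms by (intro mult_mono) auto
  then have "c^2 * real l0 * (real l0 + 1) * k^2 \<le> c^2 * real l * (real l + 1) * k^2"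
    by (metis mult.assoc mult_left_mono mult_right_mono zero_le_power2)
  then show ?thesis unfolding Kl'_def by (intro real_sqrt_le_mono) simp
qed

lemma l0_gt: "x < real (nat \<lfloor>x\<rfloor> + 1)"
proof (cases "x < 0")
  case True then show ?thesis by simp
next
  case False
  then have "real (nat \<lfloor>x\<rfloor>) = of_int \<lfloor>x\<rfloor>" by simp
  then show ?thesis by linarith
qed

lemma l0_le: "0 \<le> x \<Longrightarrow> x < real l \<Longrightarrow> nat \<lfloor>x\<rfloor> + 1 \<le> l"
proof -
  assume x0: "0 \<le> x" and x: "x < real l"
  have "of_int \<lfloor>x\<rfloor> < real l" using x by linarith
  then have "\<lfloor>x\<rfloor> < int l" by linarith
  moreover have "0 \<le> \<lfloor>x\<rfloor>" using x0 by simp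
  ultimately have "nat \<lfloor>x\<rfloor> < l" using nat_less_iff by blast
  then show ?thesis by simp
qed

lemma lstar_nonneg:
  assumes "c > 0" "D > 0" "k > 0"
  shows "0 \<le> lstar c D k"
  using lstar_iff[OF assms order_refl] by simp

lemma ev_bound:
  assumes c: "c > 0" and D: "D > 0" and k: "k > 0" and t: "t \<ge> 0"
  defines "\<kappa> \<equiv> Kl' c D k (nat \<lfloor>lstar c D k\<rfloor> + 1)"
  defines "K0 \<equiv> 1 + c^2 / (2 * D) / \<kappa>"
  shows "\<bar>exp (- (c^2 * t) / (2 * D)) * (Al c D k l t + Bl c D k l t)\<bar> \<le> K0"
    and "lstar c D k < real l \<Longrightarrow> \<bar>exp (- (c^2 * t) / (2 * D)) * (Al c D k l t + Bl c D k l t)\<bar> \<le> K0 * exp (- (c^2 * t) / (2 * D))"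
proof -
  define \<alpha> where "\<alpha> = c^2 / (2 * D)"
  have \<alpha>: "\<alpha> > 0" using c D by (simp add: \<alpha>_def)
  have e: "- (c^2 * t) / (2 * D) = - \<alpha> * t" by (simp add: \<alpha>_def)
  have \<kappa>: "\<kappa> > 0" unfolding \<kappa>_def by (rule Kl'_pos[OF c D k l0_gt])
  have K0: "K0 \<ge> 1" unfolding K0_def using \<kappa> \<alpha> by (simp add: \<alpha>_def[symmetric])
  have ex1: "exp (- \<alpha> * t) \<le> 1" using \<alpha> t by simp
  have case2: "\<bar>exp (- (c^2 * t) / (2 * D)) * (Al c D k l t + Bl c D k l t)\<bar> \<le> K0 * exp (- (c^2 * t) / (2 * D))"
    if l: "lstar c D k < real l"
  proof -
    define K' where "K' = Kl' c D k l"
    have K'pos: "K' > 0" unfolding K'_def by (rule Kl'_pos[OF c D k l])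
    have "\<kappa> \<le> K'" unfolding \<kappa>_def K'_def by (rule Kl'_mono[OF l0_le[OF lstar_nonneg[OF c D k] l]])
    then have b: "\<alpha> / K' \<le> \<alpha> / \<kappa>" using \<kappa> \<alpha> by (intro divide_left_mono) auto
    have "Al c D k l t + Bl c D k l t = cos (t * K') + (\<alpha> / K') * sin (t * K')"
      using l by (simp add: Al_def Bl_def K'_def \<alpha>_def)
    moreover have "\<bar>cos (t * K') + (\<alpha> / K') * sin (t * K')\<bar> \<le> 1 + \<alpha> / K'"
      by (rule B_bound) (use \<alpha> K'pos in simp)
    ultimately have "\<bar>Al c D k l t + Bl c D k l t\<bar> \<le> K0" using b by (simp add: K0_def \<alpha>_def)
    then show ?thesis by (simp add: abs_mult mult.commute mult_left_mono)
  qed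
  show "lstar c D k < real l \<Longrightarrow> \<bar>exp (- (c^2 * t) / (2 * D)) * (Al c D k l t + Bl c D k l t)\<bar> \<le> K0 * exp (- (c^2 * t) / (2 * D))"
    by (rule case2)
  show "\<bar>exp (- (c^2 * t) / (2 * D)) * (Al c D k l t + Bl c D k l t)\<bar> \<le> K0"
  proof (cases "real l \<le> lstar c D k")
    case True
    define K where "K = Kl c D k l"
    have K: "0 \<le> K" "K \<le> \<alpha>" using Kl_bounds[OF c D k True] by (auto simp: K_def \<alpha>_def)
    have A: "Al c D k l t + Bl c D k l t = cosh (t * K) + \<alpha> * (if K = 0 then t else sinh (t * K) / K)"
      using True by (simp add: Al_def Bl_def K_def \<alpha>_def)
    have "\<bar>exp (- \<alpha> * t) * (Al c D k l t + Bl c D k l t)\<bar> \<le> 1"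
      unfolding A using A_bound[OF K t] by simp
    then show ?thesis unfolding e using K0 by linarith
  next
    case False
    then have "\<bar>exp (- (c^2 * t) / (2 * D)) * (Al c D k l t + Bl c D k l t)\<bar> \<le> K0 * exp (- (c^2 * t) / (2 * D))"
      by (intro case2) simp
    also have "\<dots> \<le> K0" using ex1 K0 unfolding e by (simp add: mult_left_le)
    finally show ?thesis .
  qed
qed

theorem theorem3:
  fixes c D k :: real
  assumes "c > 0" and "D > 0" and "k > 0"
  shows "\<exists>Cst\<ge>0. \<forall>(M :: 'a measure) a Cl (L :: nat) (t :: real) U.
     iso_gauss_field M a Cl \<and> t > 0 \<and>
     (\<lambda>(\<omega>, \<theta>, \<phi>). U \<omega> \<theta> \<phi>) \<in> borel_measurable (M \<Otimes>\<^sub>M (lborel \<Otimes>\<^sub>M lborel)) \<and>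
     (\<lambda>N. L2sq M (\<lambda>\<omega> \<theta> \<phi>. U \<omega> \<theta> \<phi> - usum c D k a N \<omega> \<theta> \<phi> t)) \<longlonglongrightarrow> 0
     \<longrightarrow>
       L2sq M (\<lambda>\<omega> \<theta> \<phi>. U \<omega> \<theta> \<phi> - usum c D k a L \<omega> \<theta> \<phi> t)
         \<le> ennreal ((Cst * sqrt (\<Sum>l. (2 * real (l + L) + 1) * Cl (l + L)))^2) \<and>
       (real L > lstar c D k \<longrightarrow>
         L2sq M (\<lambda>\<omega> \<theta> \<phi>. U \<omega> \<theta> \<phi> - usum c D k a L \<omega> \<theta> \<phi> t)
           \<le> ennreal ((Cst * exp (- (c^2 * t) / (2 * D)) * sqrt (\<Sum>l. (2 * real (l + L) + 1) * Cl (l + L)))^2))"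
proof -
  define \<kappa> where "\<kappa> = Kl' c D k (nat \<lfloor>lstar c D k\<rfloor> + 1)"
  define K0 where "K0 = 1 + c^2 / (2 * D) / \<kappa>"
  have \<kappa>: "\<kappa> > 0" unfolding \<kappa>_def by (rule Kl'_pos[OF assms l0_gt])
  have K0: "K0 \<ge> 1" unfolding K0_def using \<kappa> assms by simp
  define Cst where "Cst = sqrt 2 * K0"
  show ?thesis
  proof (intro exI[of _ Cst] conjI allI impI)
    show "Cst \<ge> 0" using K0 by (simp add: Cst_def)
    fix M :: "'a measure" and a Cl and L :: nat and t :: real and U
    assume H: "iso_gauss_field M a Cl \<and> t > 0 \<and>
     (\<lambda>(\<omega>, \<theta>, \<phi>). U \<omega> \<theta> \<phi>) \<in> borel_measurable (M \<Otimes>\<^sub>M (lborel \<Otimes>\<^sub>M lborel)) \<and>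
     (\<lambda>N. L2sq M (\<lambda>\<omega> \<theta> \<phi>. U \<omega> \<theta> \<phi> - usum c D k a N \<omega> \<theta> \<phi> t)) \<longlonglongrightarrow> 0"
    then have field: "iso_gauss_field M a Cl" and t: "t > 0"
      and Um: "(\<lambda>(\<omega>, \<theta>, \<phi>). U \<omega> \<theta> \<phi>) \<in> borel_measurable (M \<Otimes>\<^sub>M (lborel \<Otimes>\<^sub>M lborel))"
      and lim0: "(\<lambda>N. L2sq M (\<lambda>\<omega> \<theta> \<phi>. U \<omega> \<theta> \<phi> - usum c D k a N \<omega> \<theta> \<phi> t)) \<longlonglongrightarrow> 0"
      by auto
    define T where "T = (\<Sum>l. (2 * real (l + L) + 1) * Cl (l + L))"
    have T0: "T \<ge> 0"
    proof -
      have sm: "summable (\<lambda>j. (\<lambda>l. (2 * real l + 1) * Cl l) (j + L))"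
        using igf_summable[OF field] by (rule iffD2[OF summable_iff_shift[of "\<lambda>l. (2 * real l + 1) * Cl l" L]])
      show ?thesis unfolding T_def using suminf_nonneg[OF sm] Cl_nonneg[OF field] by simp
    qed
    define ev where "ev l = exp (- (c^2 * t) / (2 * D)) * (Al c D k l t + Bl c D k l t)" for l
    have main: "L2sq M (\<lambda>\<omega> \<theta> \<phi>. U \<omega> \<theta> \<phi> - usum c D k a L \<omega> \<theta> \<phi> t) \<le> ennreal (2 * (K^2 * T))"
      if K: "\<And>l. L \<le> l \<Longrightarrow> \<bar>ev l\<bar> \<le> K" for K
    proof -
      have step: "L2sq M (\<lambda>\<omega> \<theta> \<phi>. U \<omega> \<theta> \<phi> - usum c D k a L \<omega> \<theta> \<phi> t)
          \<le> 2 * L2sq M (\<lambda>\<omega> \<theta> \<phi>. U \<omega> \<theta> \<phi> - usum c D k a N \<omega> \<theta> \<phi> t) + 2 * ennreal (K^2 * T)"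
        if N: "L \<le> N" for N
      proof -
        have t1: "L2sq M (\<lambda>\<omega> \<theta> \<phi>. U \<omega> \<theta> \<phi> - usum c D k a L \<omega> \<theta> \<phi> t)
          \<le> 2 * L2sq M (\<lambda>\<omega> \<theta> \<phi>. U \<omega> \<theta> \<phi> - usum c D k a N \<omega> \<theta> \<phi> t)
            + 2 * L2sq M (\<lambda>\<omega> \<theta> \<phi>. usum c D k a N \<omega> \<theta> \<phi> t - usum c D k a L \<omega> \<theta> \<phi> t)"
          by (rule L2sq_tri[OF Um usum_meas[OF field] usum_meas[OF field]])
        have t2: "L2sq M (\<lambda>\<omega> \<theta> \<phi>. usum c D k a N \<omega> \<theta> \<phi> t - usum c D k a L \<omega> \<theta> \<phi> t) \<le> ennreal (K^2 * T)"
          unfolding T_def by (rule diff_L2[OF field N]) (use K in \<open>simp add: ev_def\<close>)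
        have "2 * L2sq M (\<lambda>\<omega> \<theta> \<phi>. usum c D k a N \<omega> \<theta> \<phi> t - usum c D k a L \<omega> \<theta> \<phi> t) \<le> 2 * ennreal (K^2 * T)"
          using t2 by (rule mult_left_mono) simp
        then show ?thesis using t1 by (meson add_left_mono order_trans)
      qed
      have lim: "(\<lambda>N. 2 * L2sq M (\<lambda>\<omega> \<theta> \<phi>. U \<omega> \<theta> \<phi> - usum c D k a N \<omega> \<theta> \<phi> t) + 2 * ennreal (K^2 * T))
          \<longlonglongrightarrow> 2 * 0 + 2 * ennreal (K^2 * T)"
        by (intro tendsto_add ennreal_tendsto_cmult lim0 tendsto_const) simp
      have "L2sq M (\<lambda>\<omega> \<theta> \<phi>. U \<omega> \<theta> \<phi> - usum c D k a L \<omega> \<theta> \<phi> t) \<le> 2 * 0 + 2 * ennreal (K^2 * T)"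
        by (rule LIMSEQ_le_const[OF lim]) (use step in blast)
      moreover have "(2 * 0 + 2 * ennreal (K^2 * T) :: ennreal) = ennreal (2 * (K^2 * T))"
        using T0 by (simp add: ennreal_mult)
      ultimately show ?thesis by simp
    qed
    have r1: "L2sq M (\<lambda>\<omega> \<theta> \<phi>. U \<omega> \<theta> \<phi> - usum c D k a L \<omega> \<theta> \<phi> t) \<le> ennreal (2 * (K0^2 * T))"
      by (rule main) (unfold ev_def K0_def \<kappa>_def, rule ev_bound(1)[OF assms], use t in simp)
    have r2: "2 * (K0^2 * T) = (Cst * sqrt T)^2"
      using T0 by (simp add: Cst_def power_mult_distrib)
    show "L2sq M (\<lambda>\<omega> \<theta> \<phi>. U \<omega> \<theta> \<phi> - usum c D k a L \<omega> \<theta> \<phi> t)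
         \<le> ennreal ((Cst * sqrt (\<Sum>l. (2 * real (l + L) + 1) * Cl (l + L)))^2)"
      using r1 unfolding r2 by (simp only: T_def)
    assume L: "real L > lstar c D k"
    have "L2sq M (\<lambda>\<omega> \<theta> \<phi>. U \<omega> \<theta> \<phi> - usum c D k a L \<omega> \<theta> \<phi> t)
        \<le> ennreal (2 * ((K0 * exp (- (c^2 * t) / (2 * D)))^2 * T))"
    proof (rule main)
      fix l assume "L \<le> l"
      then have "lstar c D k < real l" using L by simp
      then show "\<bar>ev l\<bar> \<le> K0 * exp (- (c^2 * t) / (2 * D))"
        unfolding ev_def K0_def \<kappa>_def by (rule ev_bound(2)[OF assms less_imp_le[OF t]])
    qed
    moreover have "2 * ((K0 * exp (- (c^2 * t) / (2 * D)))^2 * T) = (Cst * exp (- (c^2 * t) / (2 * D)) * sqrt T)^2"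
      using T0 by (simp add: Cst_def power_mult_distrib)
    ultimately show "L2sq M (\<lambda>\<omega> \<theta> \<phi>. U \<omega> \<theta> \<phi> - usum c D k a L \<omega> \<theta> \<phi> t)
           \<le> ennreal ((Cst * exp (- (c^2 * t) / (2 * D)) * sqrt (\<Sum>l. (2 * real (l + L) + 1) * Cl (l + L)))^2)"
      unfolding T_def by simp
  qed
qed

end
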